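(* Let $R$ be a ring, $S$ a left Ore set of $R$, and $\mathfrak{a}=\mathrm{ass}_R(S)$. Then \begin{enumerate} \item $S$ is a left localizable set of $R$ if and only if ${}'\mathfrak{a}\neq R$, where ${}'\mathfrak{a}={}'\mathfrak{a}(S)$. \item Suppose ${}'\mathfrak{a}\neq R$. Let ${}'\pi:R\to{}'R:=R/{}'\mathfrak{a}$, $r\mapsto{}'r=r+{}'\mathfrak{a}$, and ${}'S={}'\pi(S)$. Then \begin{enumerate} \item ${}'S$ is a left denominator set of ${}'R$ contained in ${}'\mathcal{C}_{{}'R}$; \item $\mathfrak{a}={}'\pi^{-1}(\mathrm{ass}_l({}'S))$; \item $R\langle S^{-1}\rangle\simeq {}'S^{-1}\,{}'R$, an $R$-isomorphism. \end{enumerate} \end{enumerate}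
   Context: Rings are associative with $1$. A multiplicative set $S$: $SS\subseteq S$, $1\in S$, $0\notin S$. $R\langle S^{-1}\rangle=R\langle X_S\rangle/I_S$, where $R\langle X_S\rangle$ is freely generated by $R$ and noncommuting indeterminates $x_s$ ($s\in S$) and $I_S$ is generated by $sx_s-1,x_ss-1$; $\mathrm{ass}_R(S)$ is the kernel of $R\to R\langle S^{-1}\rangle$. $S$ is left localizable if $R\langle S^{-1}\rangle\ne0$ and every element is of the form $(x_s+I_S)(r+I_S)$, $s\in S$, $r\in R$. Left Ore set: $Sr\cap Rs\ne\emptyset$ for all $r\in R$, $s\in S$. Left denominator set: left Ore and $rs=0$ ($s\in S$) implies $tr=0$ for some $t\in S$; $T^{-1}A$ is the Ore localization. For a ring $A$, ${}'\mathcal{C}_A=\{r\in A: xr=0\Rightarrow x=0\}$; $\mathrm{ass}_l(T)=\{a\in A: ta=0\text{ for some } t\in T\}$. ${}'\mathfrak{a}(S)$ is the least ideal $\mathfrak{b}$ of $R$ such that the image of $S$ in $R/\mathfrak{b}$ is contained in ${}'\mathcal{C}_{R/\mathfrak{b}}$ (it exists). An $R$-isomorphism is an isomorphism compatible with the structure maps from $R$. *)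

theory Defs
  imports "HOL-Algebra.Algebra"
begin

definition mult_set :: "('a, 'm) ring_scheme \<Rightarrow> 'a set \<Rightarrow> bool" where
  "mult_set R S \<longleftrightarrow> S \<subseteq> carrier R \<and> \<one>\<^bsub>R\<^esub> \<in> S \<and> \<zero>\<^bsub>R\<^esub> \<notin> S \<and>
     (\<forall>s\<in>S. \<forall>t\<in>S. s \<otimes>\<^bsub>R\<^esub> t \<in> S)"

definition left_ore_set :: "('a, 'm) ring_scheme \<Rightarrow> 'a set \<Rightarrow> bool" where
  "left_ore_set R S \<longleftrightarrow> mult_set R S \<and>
     (\<forall>r\<in>carrier R. \<forall>s\<in>S. \<exists>t\<in>S. \<exists>r'\<in>carrier R. t \<otimes>\<^bsub>R\<^esub> r = r' \<otimes>\<^bsub>R\<^esub> s)"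

definition left_denominator_set :: "('a, 'm) ring_scheme \<Rightarrow> 'a set \<Rightarrow> bool" where
  "left_denominator_set R S \<longleftrightarrow> left_ore_set R S \<and>
     (\<forall>r\<in>carrier R. \<forall>s\<in>S. r \<otimes>\<^bsub>R\<^esub> s = \<zero>\<^bsub>R\<^esub> \<longrightarrow> (\<exists>t\<in>S. t \<otimes>\<^bsub>R\<^esub> r = \<zero>\<^bsub>R\<^esub>))"

definition left_reg :: "('a, 'm) ring_scheme \<Rightarrow> 'a set" where
  "left_reg A = {r \<in> carrier A. \<forall>x\<in>carrier A. x \<otimes>\<^bsub>A\<^esub> r = \<zero>\<^bsub>A\<^esub> \<longrightarrow> x = \<zero>\<^bsub>A\<^esub>}"

definition ass_l :: "('a, 'm) ring_scheme \<Rightarrow> 'a set \<Rightarrow> 'a set" where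
  "ass_l A T = {a \<in> carrier A. \<exists>t\<in>T. t \<otimes>\<^bsub>A\<^esub> a = \<zero>\<^bsub>A\<^esub>}"

definition image_left_reg :: "('a, 'm) ring_scheme \<Rightarrow> 'a set \<Rightarrow> 'a set \<Rightarrow> bool" where
  "image_left_reg R S b \<longleftrightarrow> (\<lambda>r. b +>\<^bsub>R\<^esub> r) ` S \<subseteq> left_reg (R Quot b)"

definition pa :: "('a, 'm) ring_scheme \<Rightarrow> 'a set \<Rightarrow> 'a set" where
  "pa R S = (THE b. ideal b R \<and> image_left_reg R S b \<and>
                  (\<forall>c. ideal c R \<and> image_left_reg R S c \<longrightarrow> b \<subseteq> c))"

definition qproj :: "('a, 'm) ring_scheme \<Rightarrow> 'a set \<Rightarrow> 'a \<Rightarrow> 'a set" where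
  "qproj R b r = b +>\<^bsub>R\<^esub> r"

text \<open>Terms over generators  r \<in> R  (RC r)  and indeterminates  x_s  (TX s).\<close>
datatype 'a rterm = RC 'a | TX 'a | TZero | TOne | TAdd "'a rterm" "'a rterm"
  | TNeg "'a rterm" | TMul "'a rterm" "'a rterm"

fun wf_rterm :: "('a, 'm) ring_scheme \<Rightarrow> 'a set \<Rightarrow> 'a rterm \<Rightarrow> bool" where
  "wf_rterm R0 S0 (RC r) = (r \<in> carrier R0)"
| "wf_rterm R0 S0 (TX s) = (s \<in> S0)"
| "wf_rterm R0 S0 TZero = True"
| "wf_rterm R0 S0 TOne = True"
| "wf_rterm R0 S0 (TAdd a b) = (wf_rterm R0 S0 a \<and> wf_rterm R0 S0 b)"
| "wf_rterm R0 S0 (TNeg a) = wf_rterm R0 S0 a"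
| "wf_rterm R0 S0 (TMul a b) = (wf_rterm R0 S0 a \<and> wf_rterm R0 S0 b)"

text \<open>The congruence: ring axioms (giving the free ring on the generators), the
  relations making R a subring-image (R<X_S> is generated by R and the x_s), and
  the relations  s x_s = 1, x_s s = 1  generating I_S.\<close>
inductive loc_rel :: "('a, 'm) ring_scheme \<Rightarrow> 'a set \<Rightarrow> 'a rterm \<Rightarrow> 'a rterm \<Rightarrow> bool"
  for R S where
  refl: "loc_rel R S t t"
| sym: "loc_rel R S t u \<Longrightarrow> loc_rel R S u t"
| trans: "loc_rel R S t u \<Longrightarrow> loc_rel R S u v \<Longrightarrow> loc_rel R S t v"
| cong_add: "loc_rel R S a a' \<Longrightarrow> loc_rel R S b b' \<Longrightarrow> loc_rel R S (TAdd a b) (TAdd a' b')"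
| cong_neg: "loc_rel R S a a' \<Longrightarrow> loc_rel R S (TNeg a) (TNeg a')"
| cong_mul: "loc_rel R S a a' \<Longrightarrow> loc_rel R S b b' \<Longrightarrow> loc_rel R S (TMul a b) (TMul a' b')"
| add_assoc: "loc_rel R S (TAdd (TAdd a b) c) (TAdd a (TAdd b c))"
| add_comm: "loc_rel R S (TAdd a b) (TAdd b a)"
| add_zero: "loc_rel R S (TAdd TZero a) a"
| add_neg: "loc_rel R S (TAdd (TNeg a) a) TZero"
| mul_assoc: "loc_rel R S (TMul (TMul a b) c) (TMul a (TMul b c))"
| mul_one_l: "loc_rel R S (TMul TOne a) a"
| mul_one_r: "loc_rel R S (TMul a TOne) a"
| distr_l: "loc_rel R S (TMul a (TAdd b c)) (TAdd (TMul a b) (TMul a c))"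
| distr_r: "loc_rel R S (TMul (TAdd a b) c) (TAdd (TMul a c) (TMul b c))"
| r_add: "r \<in> carrier R \<Longrightarrow> r' \<in> carrier R \<Longrightarrow>
          loc_rel R S (RC (r \<oplus>\<^bsub>R\<^esub> r')) (TAdd (RC r) (RC r'))"
| r_mul: "r \<in> carrier R \<Longrightarrow> r' \<in> carrier R \<Longrightarrow>
          loc_rel R S (RC (r \<otimes>\<^bsub>R\<^esub> r')) (TMul (RC r) (RC r'))"
| r_one: "loc_rel R S (RC \<one>\<^bsub>R\<^esub>) TOne"
| inv_l: "s \<in> S \<Longrightarrow> loc_rel R S (TMul (RC s) (TX s)) TOne"
| inv_r: "s \<in> S \<Longrightarrow> loc_rel R S (TMul (TX s) (RC s)) TOne"

definition loc_class :: "('a, 'm) ring_scheme \<Rightarrow> 'a set \<Rightarrow> 'a rterm \<Rightarrow> 'a rterm set" where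
  "loc_class R S t = {u. loc_rel R S t u}"

definition rep :: "'b set \<Rightarrow> 'b" where
  "rep A = (SOME a. a \<in> A)"

definition univ_loc :: "('a, 'm) ring_scheme \<Rightarrow> 'a set \<Rightarrow> ('a rterm set) ring" where
  "univ_loc R S =
    \<lparr>carrier = loc_class R S ` {t. wf_rterm R S t},
     monoid.mult = (\<lambda>A B. loc_class R S (TMul (rep A) (rep B))),
     one = loc_class R S TOne,
     ring.zero = loc_class R S TZero,
     ring.add = (\<lambda>A B. loc_class R S (TAdd (rep A) (rep B)))\<rparr>"

definition loc_map :: "('a, 'm) ring_scheme \<Rightarrow> 'a set \<Rightarrow> 'a \<Rightarrow> 'a rterm set" where
  "loc_map R S r = loc_class R S (RC r)"

definition loc_x :: "('a, 'm) ring_scheme \<Rightarrow> 'a set \<Rightarrow> 'a \<Rightarrow> 'a rterm set" where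
  "loc_x R S s = loc_class R S (TX s)"

definition ass :: "('a, 'm) ring_scheme \<Rightarrow> 'a set \<Rightarrow> 'a set" where
  "ass R S = {r \<in> carrier R. loc_map R S r = \<zero>\<^bsub>univ_loc R S\<^esub>}"

definition left_localizable :: "('a, 'm) ring_scheme \<Rightarrow> 'a set \<Rightarrow> bool" where
  "left_localizable R S \<longleftrightarrow> \<one>\<^bsub>univ_loc R S\<^esub> \<noteq> \<zero>\<^bsub>univ_loc R S\<^esub> \<and>
     (\<forall>q\<in>carrier (univ_loc R S). \<exists>s\<in>S. \<exists>r\<in>carrier R.
        q = loc_x R S s \<otimes>\<^bsub>univ_loc R S\<^esub> loc_map R S r)"

text \<open>This determines T^-1 A up to A-isomorphism.\<close>
definition is_left_ore_localization ::
  "('a, 'm) ring_scheme \<Rightarrow> 'a set \<Rightarrow> ('b, 'n) ring_scheme \<Rightarrow> ('a \<Rightarrow> 'b) \<Rightarrow> bool" where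
  "is_left_ore_localization A T Q \<sigma> \<longleftrightarrow> ring Q \<and> \<sigma> \<in> ring_hom A Q \<and>
     (\<forall>t\<in>T. \<sigma> t \<in> Units Q) \<and>
     (\<forall>q\<in>carrier Q. \<exists>t\<in>T. \<exists>a\<in>carrier A. q = inv\<^bsub>Q\<^esub> (\<sigma> t) \<otimes>\<^bsub>Q\<^esub> \<sigma> a) \<and>
     {a \<in> carrier A. \<sigma> a = \<zero>\<^bsub>Q\<^esub>} = ass_l A T"

end

theory Submission
  imports Defs
begin
context fixes R :: "('a,'m) ring_scheme" and S :: "'a set"
begin

lemma loc_class_eq: "loc_class R S t = loc_class R S u \<longleftrightarrow> loc_rel R S t u"
proof
  assume "loc_class R S t = loc_class R S u"
  moreover have "u \<in> loc_class R S u" by (simp add: loc_class_def loc_rel.refl)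
  ultimately show "loc_rel R S t u" unfolding loc_class_def by blast
next
  assume h: "loc_rel R S t u"
  show "loc_class R S t = loc_class R S u"
    unfolding loc_class_def using h loc_rel.sym loc_rel.trans by blast
qed

lemma rep_class: "loc_rel R S t (rep (loc_class R S t))"
proof -
  have "t \<in> loc_class R S t" by (simp add: loc_class_def loc_rel.refl)
  hence "rep (loc_class R S t) \<in> loc_class R S t" unfolding rep_def by (rule someI)
  thus ?thesis by (simp add: loc_class_def)
qed

lemma L_mult: "loc_class R S t \<otimes>\<^bsub>univ_loc R S\<^esub> loc_class R S u = loc_class R S (TMul t u)"
  unfolding univ_loc_def loc_class_eq
  by (simp add: loc_class_eq loc_rel.cong_mul loc_rel.sym rep_class)

lemma L_add: "loc_class R S t \<oplus>\<^bsub>univ_loc R S\<^esub> loc_class R S u = loc_class R S (TAdd t u)"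
  unfolding univ_loc_def loc_class_eq
  by (simp add: loc_class_eq loc_rel.cong_add loc_rel.sym rep_class)

lemma L_one: "\<one>\<^bsub>univ_loc R S\<^esub> = loc_class R S TOne"
  by (simp add: univ_loc_def)
lemma L_zero: "\<zero>\<^bsub>univ_loc R S\<^esub> = loc_class R S TZero"
  by (simp add: univ_loc_def)
lemma L_carrier: "carrier (univ_loc R S) = loc_class R S ` {t. wf_rterm R S t}"
  by (simp add: univ_loc_def)

lemma L_ring: "ring (univ_loc R S)"
proof (rule ringI)
  show "abelian_group (univ_loc R S)"
  proof (rule abelian_groupI)
    show "\<zero>\<^bsub>univ_loc R S\<^esub> \<in> carrier (univ_loc R S)" 
      by (auto simp: L_zero L_carrier)
  next
    fix x y assume "x \<in> carrier (univ_loc R S)" "y \<in> carrier (univ_loc R S)"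
    then show "x \<oplus>\<^bsub>univ_loc R S\<^esub> y \<in> carrier (univ_loc R S)"
      by (auto simp: L_add L_carrier)
  next
    fix x y z assume "x \<in> carrier (univ_loc R S)" "y \<in> carrier (univ_loc R S)" "z \<in> carrier (univ_loc R S)"
    then show "x \<oplus>\<^bsub>univ_loc R S\<^esub> y \<oplus>\<^bsub>univ_loc R S\<^esub> z = x \<oplus>\<^bsub>univ_loc R S\<^esub> (y \<oplus>\<^bsub>univ_loc R S\<^esub> z)"
      by (clarsimp simp: L_carrier) (simp add: L_add L_carrier loc_class_eq loc_rel.add_assoc)
  next
    fix x y assume "x \<in> carrier (univ_loc R S)" "y \<in> carrier (univ_loc R S)"
    then show "x \<oplus>\<^bsub>univ_loc R S\<^esub> y = y \<oplus>\<^bsub>univ_loc R S\<^esub> x"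
      by (clarsimp simp: L_carrier) (simp add: L_add L_carrier loc_class_eq loc_rel.add_comm)
  next
    fix x assume "x \<in> carrier (univ_loc R S)"
    then show "\<zero>\<^bsub>univ_loc R S\<^esub> \<oplus>\<^bsub>univ_loc R S\<^esub> x = x"
      by (clarsimp simp: L_carrier) (simp add: L_add L_zero L_carrier loc_class_eq loc_rel.add_zero)
  next
    fix x assume "x \<in> carrier (univ_loc R S)"
    then obtain t where t: "wf_rterm R S t" "x = loc_class R S t" by (auto simp: L_carrier)
    show "\<exists>y\<in>carrier (univ_loc R S). y \<oplus>\<^bsub>univ_loc R S\<^esub> x = \<zero>\<^bsub>univ_loc R S\<^esub>"
      by (rule bexI[of _ "loc_class R S (TNeg t)"])
        (use t in \<open>auto simp: L_add L_zero L_carrier loc_class_eq intro: loc_rel.add_neg\<close>)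
  qed
next
  show "monoid (univ_loc R S)"
  proof (rule monoidI)
    show "\<one>\<^bsub>univ_loc R S\<^esub> \<in> carrier (univ_loc R S)" 
      by (auto simp: L_one L_carrier)
  next
    fix x y assume "x \<in> carrier (univ_loc R S)" "y \<in> carrier (univ_loc R S)"
    then show "x \<otimes>\<^bsub>univ_loc R S\<^esub> y \<in> carrier (univ_loc R S)"
      by (auto simp: L_mult L_carrier)
  next
    fix x y z assume "x \<in> carrier (univ_loc R S)" "y \<in> carrier (univ_loc R S)" "z \<in> carrier (univ_loc R S)"
    then show "x \<otimes>\<^bsub>univ_loc R S\<^esub> y \<otimes>\<^bsub>univ_loc R S\<^esub> z = x \<otimes>\<^bsub>univ_loc R S\<^esub> (y \<otimes>\<^bsub>univ_loc R S\<^esub> z)"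
      by (clarsimp simp: L_carrier) (simp add: L_mult L_carrier loc_class_eq loc_rel.mul_assoc)
  next
    fix x assume "x \<in> carrier (univ_loc R S)"
    then show "\<one>\<^bsub>univ_loc R S\<^esub> \<otimes>\<^bsub>univ_loc R S\<^esub> x = x"
      by (clarsimp simp: L_carrier) (simp add: L_mult L_one L_carrier loc_class_eq loc_rel.mul_one_l)
  next
    fix x assume "x \<in> carrier (univ_loc R S)"
    then show "x \<otimes>\<^bsub>univ_loc R S\<^esub> \<one>\<^bsub>univ_loc R S\<^esub> = x"
      by (clarsimp simp: L_carrier) (simp add: L_mult L_one L_carrier loc_class_eq loc_rel.mul_one_r)
  qed
next
  fix x y z assume "x \<in> carrier (univ_loc R S)" "y \<in> carrier (univ_loc R S)" "z \<in> carrier (univ_loc R S)"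
  then show "(x \<oplus>\<^bsub>univ_loc R S\<^esub> y) \<otimes>\<^bsub>univ_loc R S\<^esub> z = x \<otimes>\<^bsub>univ_loc R S\<^esub> z \<oplus>\<^bsub>univ_loc R S\<^esub> y \<otimes>\<^bsub>univ_loc R S\<^esub> z"
    by (clarsimp simp: L_carrier) (simp add: L_mult L_add L_carrier loc_class_eq loc_rel.distr_r)
next
  fix x y z assume "x \<in> carrier (univ_loc R S)" "y \<in> carrier (univ_loc R S)" "z \<in> carrier (univ_loc R S)"
  then show "z \<otimes>\<^bsub>univ_loc R S\<^esub> (x \<oplus>\<^bsub>univ_loc R S\<^esub> y) = z \<otimes>\<^bsub>univ_loc R S\<^esub> x \<oplus>\<^bsub>univ_loc R S\<^esub> z \<otimes>\<^bsub>univ_loc R S\<^esub> y"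
    by (clarsimp simp: L_carrier) (simp add: L_mult L_add L_carrier loc_class_eq loc_rel.distr_l)
qed

end

fun leval :: "('a,'m) ring_scheme \<Rightarrow> 'a set \<Rightarrow> ('b,'n) ring_scheme \<Rightarrow> ('a \<Rightarrow> 'b) \<Rightarrow> 'a rterm \<Rightarrow> 'b" where
  "leval R S Q f (RC r) = (if r \<in> carrier R then f r else \<zero>\<^bsub>Q\<^esub>)"
| "leval R S Q f (TX s) = (if s \<in> S then inv\<^bsub>Q\<^esub> (f s) else \<zero>\<^bsub>Q\<^esub>)"
| "leval R S Q f TZero = \<zero>\<^bsub>Q\<^esub>"
| "leval R S Q f TOne = \<one>\<^bsub>Q\<^esub>"
| "leval R S Q f (TAdd a b) = leval R S Q f a \<oplus>\<^bsub>Q\<^esub> leval R S Q f b"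
| "leval R S Q f (TNeg a) = \<ominus>\<^bsub>Q\<^esub> leval R S Q f a"
| "leval R S Q f (TMul a b) = leval R S Q f a \<otimes>\<^bsub>Q\<^esub> leval R S Q f b"

lemma leval_carrier:
  assumes "ring Q" "f \<in> ring_hom R Q" "\<forall>s\<in>S. f s \<in> Units Q"
  shows "leval R S Q f t \<in> carrier Q"
proof -
  interpret Q: ring Q by fact
  show ?thesis
    by (induction t) (use assms in \<open>auto simp: ring_hom_def\<close>)
qed

lemma leval_rel:
  assumes "ring R" "ring Q" "f \<in> ring_hom R Q" "\<forall>s\<in>S. f s \<in> Units Q"
    and "loc_rel R S t u" and SC: "S \<subseteq> carrier R"
  shows "leval R S Q f t = leval R S Q f u"
  using assms(5)
proof (induction rule: loc_rel.induct)
  interpret Q: ring Q by fact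
  interpret R: ring R by fact
  note C = leval_carrier[OF assms(2-4)]
  {
    case (add_assoc a b c) show ?case using C by (simp add: Q.a_assoc) }
  { case (add_comm a b) show ?case using C by (simp add: Q.a_comm) }
  { case (add_zero a) show ?case using C by simp }
  { case (add_neg a) show ?case using C by (simp add: Q.l_neg) }
  { case (mul_assoc a b c) show ?case using C by (simp add: Q.m_assoc) }
  { case (mul_one_l a) show ?case using C by simp }
  { case (mul_one_r a) show ?case using C by simp }
  { case (distr_l a b c) show ?case using C by (simp add: Q.r_distr) }
  { case (distr_r a b c) show ?case using C by (simp add: Q.l_distr) }
  { case (r_add r r') show ?case using assms(3) r_add by (simp add: ring_hom_add) }
  { case (r_mul r r') show ?case using assms(3) r_mul by (simp add: ring_hom_mult) }
  { case r_one show ?case using assms(3) by (simp add: ring_hom_one) }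
  { case (inv_l s) show ?case using assms(4) inv_l SC by auto }
  { case (inv_r s) show ?case using assms(4) inv_r SC by auto }
qed auto

lemma rep_L: "x \<in> carrier (univ_loc R S) \<Longrightarrow> \<exists>t. wf_rterm R S t \<and> x = loc_class R S t"
  by (auto simp: L_carrier)

lemma univ_prop:
  assumes "ring R" "ring Q" "f \<in> ring_hom R Q" "\<forall>s\<in>S. f s \<in> Units Q" "S \<subseteq> carrier R"
  shows "\<exists>g \<in> ring_hom (univ_loc R S) Q. (\<forall>r\<in>carrier R. g (loc_map R S r) = f r) \<and>
           (\<forall>s\<in>S. g (loc_x R S s) = inv\<^bsub>Q\<^esub> (f s))"
proof -
  define g where "g = (\<lambda>A. leval R S Q f (rep A))"
  have gc: "g (loc_class R S t) = leval R S Q f t" for t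
    unfolding g_def using leval_rel[OF assms(1-4) _ assms(5)] rep_class[of R S t] loc_rel.sym by metis
  have "g \<in> ring_hom (univ_loc R S) Q"
  proof (rule ring_hom_memI)
    fix x assume "x \<in> carrier (univ_loc R S)"
    then show "g x \<in> carrier Q" using leval_carrier[OF assms(2-4)] by (auto simp: L_carrier gc)
  next
    fix x y assume "x \<in> carrier (univ_loc R S)" "y \<in> carrier (univ_loc R S)"
    then show "g (x \<otimes>\<^bsub>univ_loc R S\<^esub> y) = g x \<otimes>\<^bsub>Q\<^esub> g y"
      by (auto simp: L_carrier gc L_mult)
  next
    fix x y assume "x \<in> carrier (univ_loc R S)" "y \<in> carrier (univ_loc R S)"
    then show "g (x \<oplus>\<^bsub>univ_loc R S\<^esub> y) = g x \<oplus>\<^bsub>Q\<^esub> g y"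
      by (auto simp: L_carrier gc L_add)
  next
    show "g \<one>\<^bsub>univ_loc R S\<^esub> = \<one>\<^bsub>Q\<^esub>" by (simp add: L_one gc)
  qed
  moreover have "\<forall>r\<in>carrier R. g (loc_map R S r) = f r" by (simp add: loc_map_def gc)
  moreover have "\<forall>s\<in>S. g (loc_x R S s) = inv\<^bsub>Q\<^esub> (f s)" by (simp add: loc_x_def gc)
  ultimately show ?thesis by blast
qed

lemma lmap_hom:
  assumes "ring R"
  shows "loc_map R S \<in> ring_hom R (univ_loc R S)"
proof (rule ring_hom_memI)
  interpret R: ring R by fact
  fix x y assume xy: "x \<in> carrier R" "y \<in> carrier R"
  show "loc_map R S (x \<otimes>\<^bsub>R\<^esub> y) = loc_map R S x \<otimes>\<^bsub>univ_loc R S\<^esub> loc_map R S y"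
    using xy by (simp add: loc_map_def L_mult loc_class_eq loc_rel.r_mul)
  show "loc_map R S (x \<oplus>\<^bsub>R\<^esub> y) = loc_map R S x \<oplus>\<^bsub>univ_loc R S\<^esub> loc_map R S y"
    using xy by (simp add: loc_map_def L_add loc_class_eq loc_rel.r_add)
next
  fix x assume "x \<in> carrier R" then show "loc_map R S x \<in> carrier (univ_loc R S)"
    by (auto simp: loc_map_def L_carrier)
next
  show "loc_map R S \<one>\<^bsub>R\<^esub> = \<one>\<^bsub>univ_loc R S\<^esub>"
    by (simp add: loc_map_def L_one loc_class_eq loc_rel.r_one)
qed

lemma lx_carrier: "s \<in> S \<Longrightarrow> loc_x R S s \<in> carrier (univ_loc R S)"
  by (auto simp: loc_x_def L_carrier)

lemma lx_inv:
  assumes "ring R" "S \<subseteq> carrier R" "s \<in> S"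
  shows "loc_map R S s \<in> Units (univ_loc R S)" "inv\<^bsub>univ_loc R S\<^esub> (loc_map R S s) = loc_x R S s"
proof -
  interpret L: ring "univ_loc R S" by (rule L_ring)
  have c: "loc_map R S s \<in> carrier (univ_loc R S)" "loc_x R S s \<in> carrier (univ_loc R S)"
    using assms lmap_hom[OF assms(1), of S] lx_carrier[of s S R] by (auto simp: ring_hom_def)
  have 1: "loc_map R S s \<otimes>\<^bsub>univ_loc R S\<^esub> loc_x R S s = \<one>\<^bsub>univ_loc R S\<^esub>"
    using assms by (simp add: loc_map_def loc_x_def L_mult L_one loc_class_eq loc_rel.inv_l)
  have 2: "loc_x R S s \<otimes>\<^bsub>univ_loc R S\<^esub> loc_map R S s = \<one>\<^bsub>univ_loc R S\<^esub>"
    using assms by (simp add: loc_map_def loc_x_def L_mult L_one loc_class_eq loc_rel.inv_r)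
  show u: "loc_map R S s \<in> Units (univ_loc R S)" using c 1 2 unfolding Units_def by blast
  show "inv\<^bsub>univ_loc R S\<^esub> (loc_map R S s) = loc_x R S s"
    using L.inv_unique'[OF c 1 2] by simp
qed

locale frc = ring_hom_ring R L h for R (structure) and L (structure) and h +
  fixes T
  assumes TC: "T \<subseteq> carrier R" and TU: "\<And>s. s \<in> T \<Longrightarrow> h s \<in> Units L"
    and Tmul: "\<And>s t. s \<in> T \<Longrightarrow> t \<in> T \<Longrightarrow> s \<otimes> t \<in> T"
    and ore: "\<And>r s. r \<in> carrier R \<Longrightarrow> s \<in> T \<Longrightarrow> \<exists>t\<in>T. \<exists>r'\<in>carrier R. t \<otimes> r = r' \<otimes> s"
begin

lemma hc: "x \<in> carrier R \<Longrightarrow> h x \<in> carrier L" by simp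

lemma inv_prod:
  assumes "u \<in> T" "s \<in> T"
  shows "inv\<^bsub>L\<^esub> (h (u \<otimes> s)) = inv\<^bsub>L\<^esub> (h s) \<otimes>\<^bsub>L\<^esub> inv\<^bsub>L\<^esub> (h u)"
proof -
  have U: "h u \<in> Units L" "h s \<in> Units L" using assms TU by auto
  have c: "u \<in> carrier R" "s \<in> carrier R" using assms TC by auto
  have "h (u \<otimes> s) = h u \<otimes>\<^bsub>L\<^esub> h s" using c by simp
  moreover have "(h u \<otimes>\<^bsub>L\<^esub> h s) \<otimes>\<^bsub>L\<^esub> (inv\<^bsub>L\<^esub> (h s) \<otimes>\<^bsub>L\<^esub> inv\<^bsub>L\<^esub> (h u)) = \<one>\<^bsub>L\<^esub>"
    using U by (simp add: S.m_assoc[symmetric] Units_closed) (simp add: S.m_assoc Units_closed)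
  moreover have "(inv\<^bsub>L\<^esub> (h s) \<otimes>\<^bsub>L\<^esub> inv\<^bsub>L\<^esub> (h u)) \<otimes>\<^bsub>L\<^esub> (h u \<otimes>\<^bsub>L\<^esub> h s) = \<one>\<^bsub>L\<^esub>"
    using U by (simp add: S.m_assoc[symmetric] Units_closed) (simp add: S.m_assoc Units_closed)
  ultimately show ?thesis
    using U S.inv_unique'[of "h u \<otimes>\<^bsub>L\<^esub> h s" "inv\<^bsub>L\<^esub> (h s) \<otimes>\<^bsub>L\<^esub> inv\<^bsub>L\<^esub> (h u)"]
    by (simp add: Units_closed)
qed

lemma inv_right:
  assumes "x \<in> carrier L" "s \<in> T" "x \<otimes>\<^bsub>L\<^esub> h s = \<one>\<^bsub>L\<^esub>"
  shows "x = inv\<^bsub>L\<^esub> (h s)"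
proof -
  have U: "h s \<in> Units L" using assms TU by auto
  have "inv\<^bsub>L\<^esub> (h s) = (x \<otimes>\<^bsub>L\<^esub> h s) \<otimes>\<^bsub>L\<^esub> inv\<^bsub>L\<^esub> (h s)" using U assms by simp
  also have "\<dots> = x \<otimes>\<^bsub>L\<^esub> (h s \<otimes>\<^bsub>L\<^esub> inv\<^bsub>L\<^esub> (h s))" by (rule S.m_assoc) (use U assms in auto)
  also have "\<dots> = x" using U assms by simp
  finally show ?thesis by simp
qed

lemma frac_add:
  assumes "s \<in> T" "t \<in> T" "a \<in> carrier R" "b \<in> carrier R"
  shows "\<exists>w\<in>T. \<exists>c\<in>carrier R. inv\<^bsub>L\<^esub> (h s) \<otimes>\<^bsub>L\<^esub> h a \<oplus>\<^bsub>L\<^esub> inv\<^bsub>L\<^esub> (h t) \<otimes>\<^bsub>L\<^esub> h b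
     = inv\<^bsub>L\<^esub> (h w) \<otimes>\<^bsub>L\<^esub> h c"
proof -
  have sc: "s \<in> carrier R" "t \<in> carrier R" using assms TC by auto
  obtain u v where uv: "u \<in> T" "v \<in> carrier R" "u \<otimes> s = v \<otimes> t" using ore[OF sc(1) assms(2)] by blast
  have uc: "u \<in> carrier R" using uv TC by auto
  define w where "w = u \<otimes> s"
  have wT: "w \<in> T" unfolding w_def by (rule Tmul[OF uv(1) assms(1)])
  have U: "h u \<in> Units L" "h s \<in> Units L" "h t \<in> Units L" "h w \<in> Units L" using uv assms wT TU by auto
  have iw: "inv\<^bsub>L\<^esub> (h w) = inv\<^bsub>L\<^esub> (h s) \<otimes>\<^bsub>L\<^esub> inv\<^bsub>L\<^esub> (h u)" unfolding w_def by (rule inv_prod[OF uv(1) assms(1)])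
  have e1: "inv\<^bsub>L\<^esub> (h w) \<otimes>\<^bsub>L\<^esub> h u = inv\<^bsub>L\<^esub> (h s)"
    using U by (simp add: iw S.m_assoc Units_closed)
  have "(inv\<^bsub>L\<^esub> (h w) \<otimes>\<^bsub>L\<^esub> h v) \<otimes>\<^bsub>L\<^esub> h t = inv\<^bsub>L\<^esub> (h w) \<otimes>\<^bsub>L\<^esub> h w"
    using U uv sc by (simp add: S.m_assoc Units_closed w_def)
  also have "\<dots> = \<one>\<^bsub>L\<^esub>" using U by simp
  finally have e2: "inv\<^bsub>L\<^esub> (h w) \<otimes>\<^bsub>L\<^esub> h v = inv\<^bsub>L\<^esub> (h t)"
    using inv_right[of "inv\<^bsub>L\<^esub> (h w) \<otimes>\<^bsub>L\<^esub> h v" t] U uv assms by (simp add: Units_closed)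
  have "inv\<^bsub>L\<^esub> (h w) \<otimes>\<^bsub>L\<^esub> h (u \<otimes> a \<oplus> v \<otimes> b)
      = (inv\<^bsub>L\<^esub> (h w) \<otimes>\<^bsub>L\<^esub> h u) \<otimes>\<^bsub>L\<^esub> h a \<oplus>\<^bsub>L\<^esub> (inv\<^bsub>L\<^esub> (h w) \<otimes>\<^bsub>L\<^esub> h v) \<otimes>\<^bsub>L\<^esub> h b"
    using U uv uc assms by (simp add: S.r_distr S.m_assoc Units_closed)
  also have "\<dots> = inv\<^bsub>L\<^esub> (h s) \<otimes>\<^bsub>L\<^esub> h a \<oplus>\<^bsub>L\<^esub> inv\<^bsub>L\<^esub> (h t) \<otimes>\<^bsub>L\<^esub> h b" using e1 e2 by simp
  finally show ?thesis using wT uv uc assms by (metis R.add.m_closed R.m_closed)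
qed

lemma frac_mul:
  assumes "s \<in> T" "t \<in> T" "a \<in> carrier R" "b \<in> carrier R"
  shows "\<exists>w\<in>T. \<exists>c\<in>carrier R. (inv\<^bsub>L\<^esub> (h s) \<otimes>\<^bsub>L\<^esub> h a) \<otimes>\<^bsub>L\<^esub> (inv\<^bsub>L\<^esub> (h t) \<otimes>\<^bsub>L\<^esub> h b)
     = inv\<^bsub>L\<^esub> (h w) \<otimes>\<^bsub>L\<^esub> h c"
proof -
  have sc: "s \<in> carrier R" "t \<in> carrier R" using assms TC by auto
  obtain u v where uv: "u \<in> T" "v \<in> carrier R" "u \<otimes> a = v \<otimes> t" using ore[OF assms(3) assms(2)] by blast
  have uc: "u \<in> carrier R" using uv TC by auto
  have U: "h u \<in> Units L" "h s \<in> Units L" "h t \<in> Units L" using uv assms TU by auto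
  have "h a \<otimes>\<^bsub>L\<^esub> inv\<^bsub>L\<^esub> (h t) = inv\<^bsub>L\<^esub> (h u) \<otimes>\<^bsub>L\<^esub> (h u \<otimes>\<^bsub>L\<^esub> h a) \<otimes>\<^bsub>L\<^esub> inv\<^bsub>L\<^esub> (h t)"
    using U assms by (simp add: S.m_assoc[symmetric] Units_closed)
  also have "\<dots> = inv\<^bsub>L\<^esub> (h u) \<otimes>\<^bsub>L\<^esub> (h v \<otimes>\<^bsub>L\<^esub> h t) \<otimes>\<^bsub>L\<^esub> inv\<^bsub>L\<^esub> (h t)"
    using uv uc sc assms by (simp flip: hom_mult)
  also have "\<dots> = inv\<^bsub>L\<^esub> (h u) \<otimes>\<^bsub>L\<^esub> h v"
    using U assms uv uc sc by (simp add: S.m_assoc Units_closed)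
  finally have e: "h a \<otimes>\<^bsub>L\<^esub> inv\<^bsub>L\<^esub> (h t) = inv\<^bsub>L\<^esub> (h u) \<otimes>\<^bsub>L\<^esub> h v" .
  have "(inv\<^bsub>L\<^esub> (h s) \<otimes>\<^bsub>L\<^esub> h a) \<otimes>\<^bsub>L\<^esub> (inv\<^bsub>L\<^esub> (h t) \<otimes>\<^bsub>L\<^esub> h b)
     = inv\<^bsub>L\<^esub> (h s) \<otimes>\<^bsub>L\<^esub> (h a \<otimes>\<^bsub>L\<^esub> inv\<^bsub>L\<^esub> (h t)) \<otimes>\<^bsub>L\<^esub> h b"
    using U assms by (simp add: S.m_assoc Units_closed)
  also have "\<dots> = (inv\<^bsub>L\<^esub> (h s) \<otimes>\<^bsub>L\<^esub> inv\<^bsub>L\<^esub> (h u)) \<otimes>\<^bsub>L\<^esub> h (v \<otimes> b)"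
    using U assms uv uc sc by (simp add: e S.m_assoc Units_closed)
  also have "\<dots> = inv\<^bsub>L\<^esub> (h (u \<otimes> s)) \<otimes>\<^bsub>L\<^esub> h (v \<otimes> b)"
    by (simp only: inv_prod[OF uv(1) assms(1)])
  finally show ?thesis using uv assms Tmul by (metis R.m_closed)
qed

lemma frac_neg:
  assumes "s \<in> T" "a \<in> carrier R"
  shows "\<ominus>\<^bsub>L\<^esub> (inv\<^bsub>L\<^esub> (h s) \<otimes>\<^bsub>L\<^esub> h a) = inv\<^bsub>L\<^esub> (h s) \<otimes>\<^bsub>L\<^esub> h (\<ominus> a)"
  using assms TU[of s] by (simp add: S.r_minus Units_closed)

end

lemma ore_unfold:
  assumes "left_ore_set R S"
  shows "S \<subseteq> carrier R" "\<one>\<^bsub>R\<^esub> \<in> S" "\<zero>\<^bsub>R\<^esub> \<notin> S" "\<And>s t. s \<in> S \<Longrightarrow> t \<in> S \<Longrightarrow> s \<otimes>\<^bsub>R\<^esub> t \<in> S"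
    "\<And>r s. r \<in> carrier R \<Longrightarrow> s \<in> S \<Longrightarrow> \<exists>t\<in>S. \<exists>r'\<in>carrier R. t \<otimes>\<^bsub>R\<^esub> r = r' \<otimes>\<^bsub>R\<^esub> s"
  using assms unfolding left_ore_set_def mult_set_def by blast+

lemma L_frc:
  assumes "ring R" "left_ore_set R S"
  shows "frc R (univ_loc R S) (loc_map R S) S"
proof -
  note O = ore_unfold[OF assms(2)]
  interpret ring_hom_ring R "univ_loc R S" "loc_map R S"
    by (rule ring_hom_ringI2[OF assms(1) L_ring lmap_hom[OF assms(1)]])
  show ?thesis
    by unfold_locales (use O lx_inv[OF assms(1) O(1)] in auto)
qed

lemma L_form:
  assumes "ring R" "left_ore_set R S" "q \<in> carrier (univ_loc R S)"
  shows "\<exists>s\<in>S. \<exists>r\<in>carrier R. q = loc_x R S s \<otimes>\<^bsub>univ_loc R S\<^esub> loc_map R S r"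
proof -
  note O = ore_unfold[OF assms(2)]
  interpret L: ring "univ_loc R S" by (rule L_ring)
  interpret R: ring R by fact
  interpret F: frc R "univ_loc R S" "loc_map R S" S by (rule L_frc[OF assms(1,2)])
  have lx: "loc_x R S s = inv\<^bsub>univ_loc R S\<^esub> (loc_map R S s)" if "s \<in> S" for s
    using lx_inv[OF assms(1) O(1) that] by simp
  have i1: "inv\<^bsub>univ_loc R S\<^esub> (loc_map R S \<one>\<^bsub>R\<^esub>) = \<one>\<^bsub>univ_loc R S\<^esub>" by simp
  have main: "wf_rterm R S t \<Longrightarrow> \<exists>s\<in>S. \<exists>r\<in>carrier R.
      loc_class R S t = inv\<^bsub>univ_loc R S\<^esub> (loc_map R S s) \<otimes>\<^bsub>univ_loc R S\<^esub> loc_map R S r" for t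
  proof (induction t)
    case (RC r)
    have e: "inv\<^bsub>univ_loc R S\<^esub> (loc_map R S \<one>\<^bsub>R\<^esub>) \<otimes>\<^bsub>univ_loc R S\<^esub> loc_map R S r = loc_class R S (RC r)"
      using RC i1 F.hc[of r] by (simp add: loc_map_def)
    show ?case using e O(2) RC.prems by (metis wf_rterm.simps(1))
  next
    case (TX s)
    then show ?case using O(2)
      by (intro bexI[of _ s] bexI[of _ "\<one>\<^bsub>R\<^esub>"]) 
         (auto simp: lx[symmetric] loc_x_def lx_carrier[unfolded loc_x_def])
  next
    case TZero
    have e: "inv\<^bsub>univ_loc R S\<^esub> (loc_map R S \<one>\<^bsub>R\<^esub>) \<otimes>\<^bsub>univ_loc R S\<^esub> loc_map R S \<zero>\<^bsub>R\<^esub> = loc_class R S TZero"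
      using i1 by (simp add: L_zero[symmetric])
    show ?case using e O(2) by (metis R.zero_closed)
  next
    case TOne
    have e: "inv\<^bsub>univ_loc R S\<^esub> (loc_map R S \<one>\<^bsub>R\<^esub>) \<otimes>\<^bsub>univ_loc R S\<^esub> loc_map R S \<one>\<^bsub>R\<^esub> = loc_class R S TOne"
      using i1 by (simp add: L_one[symmetric])
    show ?case using e O(2) by (metis R.one_closed)
  next
    case (TAdd a b)
    then obtain s r s' r' where h: "s \<in> S" "r \<in> carrier R" "s' \<in> S" "r' \<in> carrier R"
      "loc_class R S a = inv\<^bsub>univ_loc R S\<^esub> (loc_map R S s) \<otimes>\<^bsub>univ_loc R S\<^esub> loc_map R S r"
      "loc_class R S b = inv\<^bsub>univ_loc R S\<^esub> (loc_map R S s') \<otimes>\<^bsub>univ_loc R S\<^esub> loc_map R S r'"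
      by auto
    have "loc_class R S (TAdd a b) = loc_class R S a \<oplus>\<^bsub>univ_loc R S\<^esub> loc_class R S b"
      by (simp add: L_add)
    then show ?case using F.frac_add[OF h(1,3,2,4)] h(5,6) by simp
  next
    case (TMul a b)
    then obtain s r s' r' where h: "s \<in> S" "r \<in> carrier R" "s' \<in> S" "r' \<in> carrier R"
      "loc_class R S a = inv\<^bsub>univ_loc R S\<^esub> (loc_map R S s) \<otimes>\<^bsub>univ_loc R S\<^esub> loc_map R S r"
      "loc_class R S b = inv\<^bsub>univ_loc R S\<^esub> (loc_map R S s') \<otimes>\<^bsub>univ_loc R S\<^esub> loc_map R S r'"
      by auto
    have "loc_class R S (TMul a b) = loc_class R S a \<otimes>\<^bsub>univ_loc R S\<^esub> loc_class R S b"
      by (simp add: L_mult)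
    then show ?case using F.frac_mul[OF h(1,3,2,4)] h(5,6) by simp
  next
    case (TNeg a)
    then obtain s r where h: "s \<in> S" "r \<in> carrier R"
      "loc_class R S a = inv\<^bsub>univ_loc R S\<^esub> (loc_map R S s) \<otimes>\<^bsub>univ_loc R S\<^esub> loc_map R S r"
      by auto
    have ca: "loc_class R S a \<in> carrier (univ_loc R S)" "loc_class R S (TNeg a) \<in> carrier (univ_loc R S)"
      using TNeg.prems by (auto simp: L_carrier)
    have "loc_class R S (TNeg a) \<oplus>\<^bsub>univ_loc R S\<^esub> loc_class R S a = \<zero>\<^bsub>univ_loc R S\<^esub>"
      by (simp add: L_add L_zero loc_class_eq loc_rel.add_neg)
    then have "loc_class R S (TNeg a) = \<ominus>\<^bsub>univ_loc R S\<^esub> loc_class R S a"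
      using L.minus_equality ca by metis
    then have "loc_class R S (TNeg a) = inv\<^bsub>univ_loc R S\<^esub> (loc_map R S s) \<otimes>\<^bsub>univ_loc R S\<^esub> loc_map R S (\<ominus>\<^bsub>R\<^esub> r)"
      using F.frac_neg[OF h(1,2)] h(3) by metis
    then show ?case using h(1,2) by (metis R.a_inv_closed)
  qed
  obtain t where t: "wf_rterm R S t" "q = loc_class R S t" using assms(3) by (auto simp: L_carrier)
  from main[OF t(1)] t(2) lx show ?thesis by auto
qed

locale germ = ring A for A (structure) +
  fixes T
  assumes TC: "T \<subseteq> carrier A" and T1: "\<one> \<in> T"
    and Tmul: "\<And>s t. s \<in> T \<Longrightarrow> t \<in> T \<Longrightarrow> s \<otimes> t \<in> T"
    and ore: "\<And>r s. r \<in> carrier A \<Longrightarrow> s \<in> T \<Longrightarrow> \<exists>t\<in>T. \<exists>r'\<in>carrier A. t \<otimes> r = r' \<otimes> s"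
    and canc: "\<And>t x. t \<in> T \<Longrightarrow> x \<in> carrier A \<Longrightarrow> x \<otimes> t = \<zero> \<Longrightarrow> x = \<zero>"
begin

definition gev :: "('a \<Rightarrow> bool) \<Rightarrow> bool" where
  "gev P \<longleftrightarrow> (\<exists>t\<in>T. \<forall>x\<in>carrier A. P (x \<otimes> t))"

definition gadm :: "('a \<Rightarrow> 'a) set" where
  "gadm = {f. f \<in> carrier A \<rightarrow> carrier A \<and> (\<exists>t\<in>T. \<exists>a\<in>carrier A. \<forall>x\<in>carrier A. f (x \<otimes> t) = x \<otimes> a)}"

definition gcls :: "('a \<Rightarrow> 'a) \<Rightarrow> ('a \<Rightarrow> 'a) set" where
  "gcls f = {g \<in> gadm. gev (\<lambda>y. f y = g y)}"

definition GR :: "('a \<Rightarrow> 'a) set ring" where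
  "GR = \<lparr>carrier = gcls ` gadm, monoid.mult = (\<lambda>F G. gcls (rep G \<circ> rep F)), one = gcls id,
     ring.zero = gcls (\<lambda>y. \<zero>), ring.add = (\<lambda>F G. gcls (\<lambda>y. rep F y \<oplus> rep G y))\<rparr>"

definition gphi :: "'a \<Rightarrow> ('a \<Rightarrow> 'a) set" where
  "gphi r = gcls (\<lambda>y. y \<otimes> r)"

definition ginv :: "'a \<Rightarrow> 'a \<Rightarrow> 'a" where
  "ginv t y = (if \<exists>x\<in>carrier A. y = x \<otimes> t then SOME x. x \<in> carrier A \<and> y = x \<otimes> t else \<zero>)"

lemma Tc: "t \<in> T \<Longrightarrow> t \<in> carrier A" using TC by auto

lemma common:
  assumes "t1 \<in> T" "t2 \<in> T"
  shows "\<exists>t3\<in>T. \<exists>w1\<in>carrier A. \<exists>w2\<in>carrier A. t3 = w1 \<otimes> t1 \<and> t3 = w2 \<otimes> t2"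
proof -
  obtain u c where "u \<in> T" "c \<in> carrier A" "u \<otimes> t1 = c \<otimes> t2" using ore[OF Tc[OF assms(1)] assms(2)] by blast
  then show ?thesis using Tmul[OF \<open>u \<in> T\<close> assms(1)] Tc by blast
qed

lemma ev_and:
  assumes "gev P" "gev Q" shows "gev (\<lambda>y. P y \<and> Q y)"
proof -
  obtain t1 where t1: "t1 \<in> T" "\<forall>x\<in>carrier A. P (x \<otimes> t1)" using assms(1) gev_def by auto
  obtain t2 where t2: "t2 \<in> T" "\<forall>x\<in>carrier A. Q (x \<otimes> t2)" using assms(2) gev_def by auto
  obtain t3 w1 w2 where w: "t3 \<in> T" "w1 \<in> carrier A" "w2 \<in> carrier A" "t3 = w1 \<otimes> t1" "t3 = w2 \<otimes> t2"
    using common[OF t1(1) t2(1)] by blast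
  have "P (x \<otimes> t3) \<and> Q (x \<otimes> t3)" if "x \<in> carrier A" for x
  proof -
    have e1: "x \<otimes> t3 = (x \<otimes> w1) \<otimes> t1" using w that t1 Tc by (simp add: m_assoc)
    have e2: "x \<otimes> t3 = (x \<otimes> w2) \<otimes> t2" using w that t2 Tc by (simp add: m_assoc)
    have c: "x \<otimes> w1 \<in> carrier A" "x \<otimes> w2 \<in> carrier A" using w that by auto
    have "P ((x \<otimes> w1) \<otimes> t1)" using t1(2) c(1) by blast
    moreover have "Q ((x \<otimes> w2) \<otimes> t2)" using t2(2) c(2) by blast
    ultimately show ?thesis unfolding e1[symmetric] e2[symmetric] by blast
  qed
  then show ?thesis using w(1) gev_def by blast
qed

lemma ev_mono:
  assumes "gev P" "\<And>y. y \<in> carrier A \<Longrightarrow> P y \<Longrightarrow> Q y" shows "gev Q"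
proof -
  obtain t where t: "t \<in> T" "\<forall>x\<in>carrier A. P (x \<otimes> t)" using assms(1) gev_def by auto
  have "\<forall>x\<in>carrier A. Q (x \<otimes> t)"
  proof
    fix x assume x: "x \<in> carrier A"
    then have "x \<otimes> t \<in> carrier A" using Tc t(1) by simp
    then show "Q (x \<otimes> t)" using assms(2) t(2) x by blast
  qed
  then show ?thesis using t(1) gev_def by blast
qed

lemma ev_true: "(\<And>y. y \<in> carrier A \<Longrightarrow> P y) \<Longrightarrow> gev P"
  unfolding gev_def using T1 by (intro bexI[of _ \<one>]) auto

lemma adm_ev:
  assumes "f \<in> gadm" "t2 \<in> T"
  shows "gev (\<lambda>y. \<exists>x\<in>carrier A. f y = x \<otimes> t2)"
proof -
  obtain t a where ta: "t \<in> T" "a \<in> carrier A" "\<forall>x\<in>carrier A. f (x \<otimes> t) = x \<otimes> a"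
    using assms(1) gadm_def by auto
  obtain u c where uc: "u \<in> T" "c \<in> carrier A" "u \<otimes> a = c \<otimes> t2" using ore[OF ta(2) assms(2)] by blast
  have "f (x \<otimes> (u \<otimes> t)) = (x \<otimes> c) \<otimes> t2" if "x \<in> carrier A" for x
  proof -
    have "f (x \<otimes> (u \<otimes> t)) = f ((x \<otimes> u) \<otimes> t)" using that uc ta Tc by (simp add: m_assoc)
    also have "\<dots> = (x \<otimes> u) \<otimes> a" using ta that uc Tc by simp
    also have "\<dots> = (x \<otimes> c) \<otimes> t2" using uc that ta Tc assms by (simp add: m_assoc)
    finally show ?thesis .
  qed
  then have "\<forall>x\<in>carrier A. \<exists>x'\<in>carrier A. f (x \<otimes> (u \<otimes> t)) = x' \<otimes> t2"
    using uc(2) m_closed by blast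
  then show ?thesis unfolding gev_def using Tmul[OF uc(1) ta(1)] by blast
qed

lemma gadmI: "f \<in> carrier A \<rightarrow> carrier A \<Longrightarrow> t \<in> T \<Longrightarrow> a \<in> carrier A \<Longrightarrow>
  (\<And>x. x \<in> carrier A \<Longrightarrow> f (x \<otimes> t) = x \<otimes> a) \<Longrightarrow> f \<in> gadm"
  unfolding gadm_def by blast

lemma gadm_lin: "f \<in> gadm \<Longrightarrow> \<exists>t\<in>T. \<exists>a\<in>carrier A. \<forall>x\<in>carrier A. f (x \<otimes> t) = x \<otimes> a"
  unfolding gadm_def by auto

lemma gadm_fun: "f \<in> gadm \<Longrightarrow> y \<in> carrier A \<Longrightarrow> f y \<in> carrier A"
  unfolding gadm_def by auto

lemma adm_closed_ev:
  assumes "f \<in> gadm" "g \<in> carrier A \<rightarrow> carrier A" "gev (\<lambda>y. f y = g y)"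
  shows "g \<in> gadm"
proof -
  obtain t a where ta: "t \<in> T" "a \<in> carrier A" "\<forall>x\<in>carrier A. f (x \<otimes> t) = x \<otimes> a"
    using assms(1) gadm_def by auto
  obtain t0 where t0: "t0 \<in> T" "\<forall>x\<in>carrier A. f (x \<otimes> t0) = g (x \<otimes> t0)" using assms(3) gev_def by auto
  obtain t3 w1 w2 where w: "t3 \<in> T" "w1 \<in> carrier A" "w2 \<in> carrier A" "t3 = w1 \<otimes> t" "t3 = w2 \<otimes> t0"
    using common[OF ta(1) t0(1)] by blast
  have "g (x \<otimes> t3) = x \<otimes> (w1 \<otimes> a)" if "x \<in> carrier A" for x
  proof -
    have "g (x \<otimes> t3) = g ((x \<otimes> w2) \<otimes> t0)" using w that Tc t0 by (simp add: m_assoc)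
    also have "\<dots> = f ((x \<otimes> w2) \<otimes> t0)" using t0 w that by simp
    also have "\<dots> = f ((x \<otimes> w1) \<otimes> t)" using w that Tc t0 ta by (simp add: m_assoc)
    also have "\<dots> = x \<otimes> (w1 \<otimes> a)" using ta w that by (simp add: m_assoc)
    finally show ?thesis .
  qed
  then show ?thesis using assms(2) w by (intro gadmI[of g t3 "w1 \<otimes> a"]) (use ta in auto)
qed

lemma geq_sym: "gev (\<lambda>y. f y = g y) \<Longrightarrow> gev (\<lambda>y. g y = f y)"
  by (erule ev_mono) simp

lemma geq_trans: "gev (\<lambda>y. f y = g y) \<Longrightarrow> gev (\<lambda>y. g y = h y) \<Longrightarrow> gev (\<lambda>y. f y = h y)"
  by (drule (1) ev_and) (erule ev_mono, simp)

lemma gcls_self: "f \<in> gadm \<Longrightarrow> f \<in> gcls f"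
  unfolding gcls_def by (auto intro: ev_true)

lemma gcls_eq: "f \<in> gadm \<Longrightarrow> g \<in> gadm \<Longrightarrow> gcls f = gcls g \<longleftrightarrow> gev (\<lambda>y. f y = g y)"
proof
  assume "f \<in> gadm" "g \<in> gadm" "gcls f = gcls g"
  then have "g \<in> gcls f" using gcls_self by auto
  then show "gev (\<lambda>y. f y = g y)" unfolding gcls_def by auto
next
  assume "gev (\<lambda>y. f y = g y)"
  then show "gcls f = gcls g" unfolding gcls_def using geq_sym geq_trans by blast
qed

lemma gcls_eqI: "f \<in> gadm \<Longrightarrow> g \<in> gadm \<Longrightarrow> (\<And>y. y \<in> carrier A \<Longrightarrow> f y = g y) \<Longrightarrow> gcls f = gcls g"
  by (simp add: gcls_eq ev_true)

lemma rep_gcls: "f \<in> gadm \<Longrightarrow> rep (gcls f) \<in> gadm \<and> gev (\<lambda>y. f y = rep (gcls f) y)"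
proof -
  assume "f \<in> gadm"
  then have "f \<in> gcls f" by (rule gcls_self)
  then have "rep (gcls f) \<in> gcls f" unfolding rep_def by (rule someI[of "\<lambda>a. a \<in> gcls f"])
  then show ?thesis unfolding gcls_def by auto
qed

lemma adm_add: "f \<in> gadm \<Longrightarrow> g \<in> gadm \<Longrightarrow> (\<lambda>y. f y \<oplus> g y) \<in> gadm"
proof -
  assume f: "f \<in> gadm" and g: "g \<in> gadm"
  obtain t1 a1 where ta1: "t1 \<in> T" "a1 \<in> carrier A" "\<forall>x\<in>carrier A. f (x \<otimes> t1) = x \<otimes> a1"
    using f gadm_def by auto
  obtain t2 a2 where ta2: "t2 \<in> T" "a2 \<in> carrier A" "\<forall>x\<in>carrier A. g (x \<otimes> t2) = x \<otimes> a2"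
    using g gadm_def by auto
  obtain t3 w1 w2 where w: "t3 \<in> T" "w1 \<in> carrier A" "w2 \<in> carrier A" "t3 = w1 \<otimes> t1" "t3 = w2 \<otimes> t2"
    using common[OF ta1(1) ta2(1)] by blast
  have "f (x \<otimes> t3) \<oplus> g (x \<otimes> t3) = x \<otimes> (w1 \<otimes> a1 \<oplus> w2 \<otimes> a2)" if "x \<in> carrier A" for x
  proof -
    have "f (x \<otimes> t3) = f ((x \<otimes> w1) \<otimes> t1)" "g (x \<otimes> t3) = g ((x \<otimes> w2) \<otimes> t2)"
      using w that Tc ta1 ta2 by (simp_all add: m_assoc)
    then show ?thesis using ta1 ta2 w that by (simp add: m_assoc r_distr)
  qed
  moreover have "(\<lambda>y. f y \<oplus> g y) \<in> carrier A \<rightarrow> carrier A" using f g gadm_fun by auto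
  ultimately show ?thesis using w ta1 ta2 by (intro gadmI[of _ t3 "w1 \<otimes> a1 \<oplus> w2 \<otimes> a2"]) auto
qed

lemma adm_neg: "f \<in> gadm \<Longrightarrow> (\<lambda>y. \<ominus> f y) \<in> gadm"
proof -
  assume f: "f \<in> gadm"
  obtain t a where ta: "t \<in> T" "a \<in> carrier A" "\<forall>x\<in>carrier A. f (x \<otimes> t) = x \<otimes> a"
    using f gadm_def by auto
  have "\<forall>x\<in>carrier A. \<ominus> f (x \<otimes> t) = x \<otimes> (\<ominus> a)" using ta by (simp add: r_minus)
  moreover have "(\<lambda>y. \<ominus> f y) \<in> carrier A \<rightarrow> carrier A" using f gadm_fun by auto
  ultimately show ?thesis using ta by (intro gadmI[of _ t "\<ominus> a"]) auto
qed

lemma adm_comp: "f \<in> gadm \<Longrightarrow> g \<in> gadm \<Longrightarrow> g \<circ> f \<in> gadm"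
proof -
  assume f: "f \<in> gadm" and g: "g \<in> gadm"
  obtain t a where ta: "t \<in> T" "a \<in> carrier A" "\<forall>x\<in>carrier A. f (x \<otimes> t) = x \<otimes> a"
    using f gadm_def by auto
  obtain t' a' where ta': "t' \<in> T" "a' \<in> carrier A" "\<forall>x\<in>carrier A. g (x \<otimes> t') = x \<otimes> a'"
    using g gadm_def by auto
  obtain u c where uc: "u \<in> T" "c \<in> carrier A" "u \<otimes> a = c \<otimes> t'" using ore[OF ta(2) ta'(1)] by blast
  have "(g \<circ> f) (x \<otimes> (u \<otimes> t)) = x \<otimes> (c \<otimes> a')" if "x \<in> carrier A" for x
  proof -
    have "f (x \<otimes> (u \<otimes> t)) = f ((x \<otimes> u) \<otimes> t)" using that uc ta Tc by (simp add: m_assoc)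
    also have "\<dots> = (x \<otimes> u) \<otimes> a" using ta that uc Tc by simp
    also have "\<dots> = (x \<otimes> c) \<otimes> t'" using uc that ta Tc ta' by (simp add: m_assoc)
    finally have "f (x \<otimes> (u \<otimes> t)) = (x \<otimes> c) \<otimes> t'" .
    then show ?thesis using ta' that uc by (simp add: m_assoc)
  qed
  moreover have "g \<circ> f \<in> carrier A \<rightarrow> carrier A" using f g gadm_fun by auto
  moreover have "c \<otimes> a' \<in> carrier A" using uc ta' by simp
  ultimately show ?thesis using Tmul[OF uc(1) ta(1)] by (intro gadmI[of _ "u \<otimes> t" "c \<otimes> a'"]) auto
qed

lemma adm_mulr: "r \<in> carrier A \<Longrightarrow> (\<lambda>y. y \<otimes> r) \<in> gadm"
  using T1 by (intro gadmI[of _ \<one> r]) auto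

lemma adm_id: "id \<in> gadm"
  unfolding gadm_def using T1 by (auto intro!: bexI[of _ \<one>])

lemma adm_zero: "(\<lambda>y. \<zero>) \<in> gadm"
  unfolding gadm_def using T1 by (auto intro!: bexI[of _ \<zero>])

lemma ginv_eq: assumes "t \<in> T" "x \<in> carrier A" shows "ginv t (x \<otimes> t) = x"
proof -
  have ex: "\<exists>x'\<in>carrier A. x \<otimes> t = x' \<otimes> t" using assms by blast
  have "(SOME x'. x' \<in> carrier A \<and> x \<otimes> t = x' \<otimes> t) = x"
  proof (rule some_equality)
    show "x \<in> carrier A \<and> x \<otimes> t = x \<otimes> t" using assms by simp
  next
    fix x' assume h: "x' \<in> carrier A \<and> x \<otimes> t = x' \<otimes> t"
    have tc: "t \<in> carrier A" using Tc assms by auto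
    have e1: "(x' \<ominus> x) \<otimes> t = x' \<otimes> t \<ominus> x \<otimes> t" using h assms tc by algebra
    have "(x' \<ominus> x) \<otimes> t = \<zero>" unfolding e1 using h assms tc by (simp add: r_neg minus_eq)
    then have "x' \<ominus> x = \<zero>" using canc[OF assms(1)] h assms by simp
    moreover have "x' = (x' \<ominus> x) \<oplus> x" using h assms by algebra
    ultimately show "x' = x" using assms by simp
  qed
  then show ?thesis using ex unfolding ginv_def by simp
qed

lemma adm_inv: "t \<in> T \<Longrightarrow> ginv t \<in> gadm"
proof -
  assume t: "t \<in> T"
  have "ginv t \<in> carrier A \<rightarrow> carrier A"
  proof
    fix y assume "y \<in> carrier A"
    show "ginv t y \<in> carrier A"
    proof (cases "\<exists>x\<in>carrier A. y = x \<otimes> t")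
      case True
      then have "\<exists>x. x \<in> carrier A \<and> y = x \<otimes> t" by blast
      then have "(SOME x. x \<in> carrier A \<and> y = x \<otimes> t) \<in> carrier A" by (metis (mono_tags, lifting) someI)
      then show ?thesis using True unfolding ginv_def by simp
    qed (simp add: ginv_def)
  qed
  moreover have "\<forall>x\<in>carrier A. ginv t (x \<otimes> t) = x \<otimes> \<one>" using ginv_eq t by simp
  ultimately show ?thesis using t by (intro gadmI[of _ t \<one>]) auto
qed

lemma add_cong: "gev (\<lambda>y. f y = f' y) \<Longrightarrow> gev (\<lambda>y. g y = g' y) \<Longrightarrow> gev (\<lambda>y. f y \<oplus> g y = f' y \<oplus> g' y)"
  by (drule (1) ev_and) (erule ev_mono, simp)

lemma comp_cong:
  assumes "f \<in> gadm" "gev (\<lambda>y. f y = f' y)" "gev (\<lambda>y. g y = g' y)"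
  shows "gev (\<lambda>y. (g \<circ> f) y = (g' \<circ> f') y)"
proof -
  obtain t2 where t2: "t2 \<in> T" "\<forall>x\<in>carrier A. g (x \<otimes> t2) = g' (x \<otimes> t2)" using assms(3) gev_def by auto
  have "gev (\<lambda>y. (\<exists>x\<in>carrier A. f y = x \<otimes> t2) \<and> f y = f' y)"
    by (rule ev_and[OF adm_ev[OF assms(1) t2(1)] assms(2)])
  moreover have "\<And>y. y \<in> carrier A \<Longrightarrow> (\<exists>x\<in>carrier A. f y = x \<otimes> t2) \<and> f y = f' y \<Longrightarrow> (g \<circ> f) y = (g' \<circ> f') y"
  proof -
    fix y assume a: "y \<in> carrier A" "(\<exists>x\<in>carrier A. f y = x \<otimes> t2) \<and> f y = f' y"
    have h2: "f y = f' y" using a(2) by (rule conjunct2)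
    have h1: "\<exists>x\<in>carrier A. f y = x \<otimes> t2" using a(2) by (rule conjunct1)
    then obtain x where x: "x \<in> carrier A" "f y = x \<otimes> t2" by (rule bexE)
    have "g (x \<otimes> t2) = g' (x \<otimes> t2)" using t2(2) x(1) by (rule bspec)
    then show "(g \<circ> f) y = (g' \<circ> f') y" unfolding comp_def h2[symmetric] x(2) .
  qed
  ultimately show ?thesis by (rule ev_mono)
qed

lemma GR_carrier: "carrier GR = gcls ` gadm" by (simp add: GR_def)

lemma GR_add: assumes "f \<in> gadm" "g \<in> gadm"
  shows "gcls f \<oplus>\<^bsub>GR\<^esub> gcls g = gcls (\<lambda>y. f y \<oplus> g y)"
proof -
  have "gcls (\<lambda>y. rep (gcls f) y \<oplus> rep (gcls g) y) = gcls (\<lambda>y. f y \<oplus> g y)"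
  proof -
    have rf: "rep (gcls f) \<in> gadm" "gev (\<lambda>y. f y = rep (gcls f) y)" using rep_gcls[OF assms(1)] by auto
    have rg: "rep (gcls g) \<in> gadm" "gev (\<lambda>y. g y = rep (gcls g) y)" using rep_gcls[OF assms(2)] by auto
    have "gev (\<lambda>y. rep (gcls f) y \<oplus> rep (gcls g) y = f y \<oplus> g y)"
      by (rule add_cong[OF geq_sym[OF rf(2)] geq_sym[OF rg(2)]])
    then show ?thesis using gcls_eq[OF adm_add[OF rf(1) rg(1)] adm_add[OF assms]] by blast
  qed
  then show ?thesis by (simp add: GR_def)
qed

lemma GR_mult: assumes "f \<in> gadm" "g \<in> gadm"
  shows "gcls f \<otimes>\<^bsub>GR\<^esub> gcls g = gcls (g \<circ> f)"
proof -
  have "gcls (rep (gcls g) \<circ> rep (gcls f)) = gcls (g \<circ> f)"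
  proof -
    have rf: "rep (gcls f) \<in> gadm" "gev (\<lambda>y. f y = rep (gcls f) y)" using rep_gcls[OF assms(1)] by auto
    have rg: "rep (gcls g) \<in> gadm" "gev (\<lambda>y. g y = rep (gcls g) y)" using rep_gcls[OF assms(2)] by auto
    have "gev (\<lambda>y. (rep (gcls g) \<circ> rep (gcls f)) y = (g \<circ> f) y)"
      by (rule comp_cong[OF rf(1) geq_sym[OF rf(2)] geq_sym[OF rg(2)]])
    then show ?thesis using gcls_eq[OF adm_comp[OF rf(1) rg(1)] adm_comp[OF assms]] by blast
  qed
  then show ?thesis by (simp add: GR_def)
qed

lemma GR_one: "\<one>\<^bsub>GR\<^esub> = gcls id" by (simp add: GR_def)
lemma GR_zero: "\<zero>\<^bsub>GR\<^esub> = gcls (\<lambda>y. \<zero>)" by (simp add: GR_def)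

end

context germ begin

lemma GR_elem: "x \<in> carrier GR \<Longrightarrow> \<exists>f\<in>gadm. x = gcls f"
  by (auto simp: GR_carrier)

lemma GR_ring: "ring GR"
proof (rule ringI)
  show "abelian_group GR"
  proof (rule abelian_groupI)
    fix x y assume "x \<in> carrier GR" "y \<in> carrier GR"
    then show "x \<oplus>\<^bsub>GR\<^esub> y \<in> carrier GR"
      by (auto simp: GR_carrier GR_add adm_add)
  next
    show "\<zero>\<^bsub>GR\<^esub> \<in> carrier GR" by (simp add: GR_carrier GR_zero adm_zero)
  next
    fix x y z assume "x \<in> carrier GR" "y \<in> carrier GR" "z \<in> carrier GR"
    then obtain f g h where fgh: "f \<in> gadm" "g \<in> gadm" "h \<in> gadm" "x = gcls f" "y = gcls g" "z = gcls h"
      by (meson GR_elem)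
    show "x \<oplus>\<^bsub>GR\<^esub> y \<oplus>\<^bsub>GR\<^esub> z = x \<oplus>\<^bsub>GR\<^esub> (y \<oplus>\<^bsub>GR\<^esub> z)"
      using fgh by (simp add: GR_add adm_add) (rule gcls_eqI, auto simp: adm_add gadm_fun a_assoc)
  next
    fix x y assume "x \<in> carrier GR" "y \<in> carrier GR"
    then obtain f g where fg: "f \<in> gadm" "g \<in> gadm" "x = gcls f" "y = gcls g"
      by (meson GR_elem)
    show "x \<oplus>\<^bsub>GR\<^esub> y = y \<oplus>\<^bsub>GR\<^esub> x"
      using fg by (simp add: GR_add adm_add) (rule gcls_eqI, auto simp: adm_add gadm_fun a_comm)
  next
    fix x assume "x \<in> carrier GR"
    then obtain f where f: "f \<in> gadm" "x = gcls f" by (meson GR_elem)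
    show "\<zero>\<^bsub>GR\<^esub> \<oplus>\<^bsub>GR\<^esub> x = x"
      using f by (simp add: GR_zero GR_add adm_zero) (rule gcls_eqI, auto simp: adm_add adm_zero gadm_fun)
  next
    fix x assume "x \<in> carrier GR"
    then obtain f where f: "f \<in> gadm" "x = gcls f" by (meson GR_elem)
    have "gcls (\<lambda>y. \<ominus> f y) \<oplus>\<^bsub>GR\<^esub> x = \<zero>\<^bsub>GR\<^esub>"
      using f by (simp add: GR_zero GR_add adm_neg) (rule gcls_eqI, auto simp: adm_add adm_neg adm_zero gadm_fun l_neg)
    moreover have "gcls (\<lambda>y. \<ominus> f y) \<in> carrier GR" using f adm_neg by (simp add: GR_carrier)
    ultimately show "\<exists>y\<in>carrier GR. y \<oplus>\<^bsub>GR\<^esub> x = \<zero>\<^bsub>GR\<^esub>" by blast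
  qed
next
  show "monoid GR"
  proof (rule monoidI)
    fix x y assume "x \<in> carrier GR" "y \<in> carrier GR"
    then show "x \<otimes>\<^bsub>GR\<^esub> y \<in> carrier GR"
      by (auto simp: GR_carrier GR_mult adm_comp)
  next
    show "\<one>\<^bsub>GR\<^esub> \<in> carrier GR" by (simp add: GR_carrier GR_one adm_id)
  next
    fix x y z assume "x \<in> carrier GR" "y \<in> carrier GR" "z \<in> carrier GR"
    then obtain f g h where fgh: "f \<in> gadm" "g \<in> gadm" "h \<in> gadm" "x = gcls f" "y = gcls g" "z = gcls h"
      by (meson GR_elem)
    show "x \<otimes>\<^bsub>GR\<^esub> y \<otimes>\<^bsub>GR\<^esub> z = x \<otimes>\<^bsub>GR\<^esub> (y \<otimes>\<^bsub>GR\<^esub> z)"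
      using fgh by (simp add: GR_mult adm_comp comp_assoc)
  next
    fix x assume "x \<in> carrier GR"
    then obtain f where f: "f \<in> gadm" "x = gcls f" by (meson GR_elem)
    show "\<one>\<^bsub>GR\<^esub> \<otimes>\<^bsub>GR\<^esub> x = x" using f by (simp add: GR_one GR_mult adm_id)
  next
    fix x assume "x \<in> carrier GR"
    then obtain f where f: "f \<in> gadm" "x = gcls f" by (meson GR_elem)
    show "x \<otimes>\<^bsub>GR\<^esub> \<one>\<^bsub>GR\<^esub> = x" using f by (simp add: GR_one GR_mult adm_id)
  qed
next
  fix x y z assume "x \<in> carrier GR" "y \<in> carrier GR" "z \<in> carrier GR"
  then obtain f g h where fgh: "f \<in> gadm" "g \<in> gadm" "h \<in> gadm" "x = gcls f" "y = gcls g" "z = gcls h"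
    by (meson GR_elem)
  obtain t a where ta: "t \<in> T" "a \<in> carrier A" "\<forall>x\<in>carrier A. h (x \<otimes> t) = x \<otimes> a"
    using gadm_lin[OF fgh(3)] by blast
  have ev: "gev (\<lambda>y. (\<exists>x\<in>carrier A. f y = x \<otimes> t) \<and> (\<exists>x\<in>carrier A. g y = x \<otimes> t))"
    by (rule ev_and[OF adm_ev[OF fgh(1) ta(1)] adm_ev[OF fgh(2) ta(1)]])
  have "gev (\<lambda>y. (h \<circ> (\<lambda>y. f y \<oplus> g y)) y = (h \<circ> f) y \<oplus> (h \<circ> g) y)"
  proof (rule ev_mono[OF ev])
    fix y assume "(\<exists>x\<in>carrier A. f y = x \<otimes> t) \<and> (\<exists>x\<in>carrier A. g y = x \<otimes> t)"
    then obtain x1 x2 where x: "x1 \<in> carrier A" "x2 \<in> carrier A" "f y = x1 \<otimes> t" "g y = x2 \<otimes> t"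
      by blast
    have tc: "t \<in> carrier A" using Tc ta by auto
    have "f y \<oplus> g y = (x1 \<oplus> x2) \<otimes> t" using x tc by (simp add: l_distr)
    then have "h (f y \<oplus> g y) = (x1 \<oplus> x2) \<otimes> a" using ta x by simp
    also have "\<dots> = h (f y) \<oplus> h (g y)" using ta x by (simp add: l_distr)
    finally show "(h \<circ> (\<lambda>y. f y \<oplus> g y)) y = (h \<circ> f) y \<oplus> (h \<circ> g) y" by simp
  qed
  moreover have m1: "h \<circ> (\<lambda>y. f y \<oplus> g y) \<in> gadm" by (intro adm_comp adm_add fgh)
  moreover have m2: "(\<lambda>y. (h \<circ> f) y \<oplus> (h \<circ> g) y) \<in> gadm" by (intro adm_comp adm_add fgh)
  ultimately have e: "gcls (h \<circ> (\<lambda>y. f y \<oplus> g y)) = gcls (\<lambda>y. (h \<circ> f) y \<oplus> (h \<circ> g) y)"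
    using gcls_eq by blast
  have "(x \<oplus>\<^bsub>GR\<^esub> y) \<otimes>\<^bsub>GR\<^esub> z = gcls (h \<circ> (\<lambda>y. f y \<oplus> g y))"
    using fgh by (simp add: GR_add GR_mult adm_add)
  moreover have "x \<otimes>\<^bsub>GR\<^esub> z \<oplus>\<^bsub>GR\<^esub> y \<otimes>\<^bsub>GR\<^esub> z = gcls (\<lambda>y. (h \<circ> f) y \<oplus> (h \<circ> g) y)"
    using fgh by (simp only: GR_add GR_mult adm_comp)
  ultimately show "(x \<oplus>\<^bsub>GR\<^esub> y) \<otimes>\<^bsub>GR\<^esub> z = x \<otimes>\<^bsub>GR\<^esub> z \<oplus>\<^bsub>GR\<^esub> y \<otimes>\<^bsub>GR\<^esub> z"
    using e by simp
next
  fix x y z assume "x \<in> carrier GR" "y \<in> carrier GR" "z \<in> carrier GR"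
  then obtain f g h where fgh: "f \<in> gadm" "g \<in> gadm" "h \<in> gadm" "x = gcls f" "y = gcls g" "z = gcls h"
    by (meson GR_elem)
  show "z \<otimes>\<^bsub>GR\<^esub> (x \<oplus>\<^bsub>GR\<^esub> y) = z \<otimes>\<^bsub>GR\<^esub> x \<oplus>\<^bsub>GR\<^esub> z \<otimes>\<^bsub>GR\<^esub> y"
    using fgh by (simp only: GR_add GR_mult adm_add adm_comp) (simp add: comp_def)
qed

lemma gphi_hom: "gphi \<in> ring_hom A GR"
proof (rule ring_hom_memI)
  fix x assume "x \<in> carrier A" then show "gphi x \<in> carrier GR"
    by (simp add: gphi_def GR_carrier adm_mulr)
next
  fix x y assume xy: "x \<in> carrier A" "y \<in> carrier A"
  show "gphi (x \<otimes> y) = gphi x \<otimes>\<^bsub>GR\<^esub> gphi y"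
    using xy by (simp add: gphi_def GR_mult adm_mulr) (rule gcls_eqI, auto simp: adm_mulr adm_comp m_assoc)
  show "gphi (x \<oplus> y) = gphi x \<oplus>\<^bsub>GR\<^esub> gphi y"
    using xy by (simp add: gphi_def GR_add adm_mulr) (rule gcls_eqI, auto simp: adm_mulr adm_add r_distr)
next
  show "gphi \<one> = \<one>\<^bsub>GR\<^esub>"
    by (simp add: gphi_def GR_one) (rule gcls_eqI, auto simp: adm_mulr adm_id)
qed

lemma gphi_unit: assumes "t \<in> T" shows "gphi t \<in> Units GR"
proof -
  have tc: "t \<in> carrier A" using Tc assms by auto
  have c: "gphi t \<in> carrier GR" "gcls (ginv t) \<in> carrier GR"
    using tc assms by (simp_all add: gphi_def GR_carrier adm_mulr adm_inv)
  have 1: "gphi t \<otimes>\<^bsub>GR\<^esub> gcls (ginv t) = \<one>\<^bsub>GR\<^esub>"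
    using tc assms by (simp add: gphi_def GR_mult GR_one adm_mulr adm_inv)
      (rule gcls_eqI, auto simp: adm_comp adm_mulr adm_inv adm_id ginv_eq)
  have "gev (\<lambda>y. ((\<lambda>y. y \<otimes> t) \<circ> ginv t) y = id y)"
    unfolding gev_def using assms ginv_eq by (intro bexI[of _ t]) auto
  then have 2: "gcls (ginv t) \<otimes>\<^bsub>GR\<^esub> gphi t = \<one>\<^bsub>GR\<^esub>"
    using tc assms by (simp add: gphi_def GR_mult GR_one adm_mulr adm_inv gcls_eq adm_comp adm_id)
  show ?thesis using c 1 2 unfolding Units_def by blast
qed

lemma gphi_ker: assumes "a \<in> carrier A"
  shows "gphi a = \<zero>\<^bsub>GR\<^esub> \<longleftrightarrow> (\<exists>t\<in>T. t \<otimes> a = \<zero>)"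
proof -
  have "gphi a = \<zero>\<^bsub>GR\<^esub> \<longleftrightarrow> gev (\<lambda>y. y \<otimes> a = \<zero>)"
    using assms by (simp add: gphi_def GR_zero gcls_eq adm_mulr adm_zero)
  also have "\<dots> \<longleftrightarrow> (\<exists>t\<in>T. t \<otimes> a = \<zero>)"
  proof
    assume "gev (\<lambda>y. y \<otimes> a = \<zero>)"
    then obtain t where t: "t \<in> T" "\<forall>x\<in>carrier A. x \<otimes> t \<otimes> a = \<zero>" unfolding gev_def by blast
    then have "\<one> \<otimes> t \<otimes> a = \<zero>" by simp
    then show "\<exists>t\<in>T. t \<otimes> a = \<zero>" using t Tc by auto
  next
    assume "\<exists>t\<in>T. t \<otimes> a = \<zero>"
    then obtain t where t: "t \<in> T" "t \<otimes> a = \<zero>" by blast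
    have "\<forall>x\<in>carrier A. x \<otimes> t \<otimes> a = \<zero>" using t Tc assms by (simp add: m_assoc)
    then show "gev (\<lambda>y. y \<otimes> a = \<zero>)" unfolding gev_def using t by blast
  qed
  finally show ?thesis .
qed

end

definition Pc :: "('a,'m) ring_scheme \<Rightarrow> 'a set \<Rightarrow> 'a set \<Rightarrow> bool" where
  "Pc R S c \<longleftrightarrow> (\<forall>s\<in>S. \<forall>y\<in>carrier R. y \<otimes>\<^bsub>R\<^esub> s \<in> c \<longrightarrow> y \<in> c)"

lemma quot_carrier: "ideal c R \<Longrightarrow> carrier (R Quot c) = (\<lambda>r. c +>\<^bsub>R\<^esub> r) ` carrier R"
  by (auto simp: FactRing_def A_RCOSETS_def')

lemma rcos_eq_zero: assumes "ideal c R" "y \<in> carrier R" shows "c +>\<^bsub>R\<^esub> y = c \<longleftrightarrow> y \<in> c"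
proof -
  interpret ideal c R by fact
  show ?thesis
  proof
    assume "c +>\<^bsub>R\<^esub> y = c" then show "y \<in> c" using a_rcos_self[OF assms(2)] by simp
  next
    assume "y \<in> c" then show "c +>\<^bsub>R\<^esub> y = c" by (rule a_rcos_const)
  qed
qed

lemma ilr_iff:
  assumes "ring R" "ideal c R" "S \<subseteq> carrier R"
  shows "image_left_reg R S c \<longleftrightarrow> Pc R S c"
proof -
  interpret ideal c R by fact
  have hom: "(\<lambda>r. c +>\<^bsub>R\<^esub> r) \<in> ring_hom R (R Quot c)" using rcos_ring_hom by simp
  have z: "\<zero>\<^bsub>R Quot c\<^esub> = c" by (simp add: FactRing_def)
  have m: "(c +>\<^bsub>R\<^esub> y) \<otimes>\<^bsub>R Quot c\<^esub> (c +>\<^bsub>R\<^esub> s) = c +>\<^bsub>R\<^esub> (y \<otimes>\<^bsub>R\<^esub> s)"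
    if "y \<in> carrier R" "s \<in> carrier R" for y s
    using ring_hom_mult[OF hom that] by simp
  have one: "c +>\<^bsub>R\<^esub> s \<in> left_reg (R Quot c) \<longleftrightarrow>
      (\<forall>y\<in>carrier R. c +>\<^bsub>R\<^esub> (y \<otimes>\<^bsub>R\<^esub> s) = c \<longrightarrow> c +>\<^bsub>R\<^esub> y = c)"
    if s: "s \<in> carrier R" for s
  proof
    assume h: "c +>\<^bsub>R\<^esub> s \<in> left_reg (R Quot c)"
    show "\<forall>y\<in>carrier R. c +>\<^bsub>R\<^esub> (y \<otimes>\<^bsub>R\<^esub> s) = c \<longrightarrow> c +>\<^bsub>R\<^esub> y = c"
    proof (intro ballI impI)
      fix y assume y: "y \<in> carrier R" "c +>\<^bsub>R\<^esub> (y \<otimes>\<^bsub>R\<^esub> s) = c"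
      have "c +>\<^bsub>R\<^esub> y \<in> carrier (R Quot c)" using y quot_carrier[OF assms(2)] by auto
      moreover have "(c +>\<^bsub>R\<^esub> y) \<otimes>\<^bsub>R Quot c\<^esub> (c +>\<^bsub>R\<^esub> s) = \<zero>\<^bsub>R Quot c\<^esub>" using m[OF y(1) s] y(2) z by simp
      ultimately show "c +>\<^bsub>R\<^esub> y = c" using h z unfolding left_reg_def by auto
    qed
  next
    assume h: "\<forall>y\<in>carrier R. c +>\<^bsub>R\<^esub> (y \<otimes>\<^bsub>R\<^esub> s) = c \<longrightarrow> c +>\<^bsub>R\<^esub> y = c"
    have "c +>\<^bsub>R\<^esub> s \<in> carrier (R Quot c)" using s quot_carrier[OF assms(2)] by auto
    moreover have "W = \<zero>\<^bsub>R Quot c\<^esub>" if W: "W \<in> carrier (R Quot c)" "W \<otimes>\<^bsub>R Quot c\<^esub> (c +>\<^bsub>R\<^esub> s) = \<zero>\<^bsub>R Quot c\<^esub>" for W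
    proof -
      obtain y where y: "y \<in> carrier R" "W = c +>\<^bsub>R\<^esub> y" using W(1) quot_carrier[OF assms(2)] by auto
      have "c +>\<^bsub>R\<^esub> (y \<otimes>\<^bsub>R\<^esub> s) = c" using W(2) m[OF y(1) s] y(2) z by simp
      then show ?thesis using h y z by simp
    qed
    ultimately show "c +>\<^bsub>R\<^esub> s \<in> left_reg (R Quot c)" unfolding left_reg_def by blast
  qed
  have "image_left_reg R S c \<longleftrightarrow> (\<forall>s\<in>S. c +>\<^bsub>R\<^esub> s \<in> left_reg (R Quot c))"
    unfolding image_left_reg_def by (simp add: image_subset_iff)
  also have "\<dots> \<longleftrightarrow> (\<forall>s\<in>S. \<forall>y\<in>carrier R. c +>\<^bsub>R\<^esub> (y \<otimes>\<^bsub>R\<^esub> s) = c \<longrightarrow> c +>\<^bsub>R\<^esub> y = c)"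
  proof (rule ball_cong[OF HOL.refl])
    fix s assume "s \<in> S" then have "s \<in> carrier R" using assms(3) by auto
    then show "c +>\<^bsub>R\<^esub> s \<in> left_reg (R Quot c) \<longleftrightarrow> (\<forall>y\<in>carrier R. c +>\<^bsub>R\<^esub> (y \<otimes>\<^bsub>R\<^esub> s) = c \<longrightarrow> c +>\<^bsub>R\<^esub> y = c)"
      by (rule one)
  qed
  also have "\<dots> \<longleftrightarrow> Pc R S c"
    unfolding Pc_def
  proof (rule ball_cong[OF HOL.refl], rule ball_cong[OF HOL.refl])
    fix s y assume "s \<in> S" "y \<in> carrier R"
    then have c: "s \<in> carrier R" "y \<in> carrier R" "y \<otimes>\<^bsub>R\<^esub> s \<in> carrier R" using assms(3) by auto
    show "(c +>\<^bsub>R\<^esub> (y \<otimes>\<^bsub>R\<^esub> s) = c \<longrightarrow> c +>\<^bsub>R\<^esub> y = c) = (y \<otimes>\<^bsub>R\<^esub> s \<in> c \<longrightarrow> y \<in> c)"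
      using rcos_eq_zero[OF assms(2) c(2)] rcos_eq_zero[OF assms(2) c(3)] by simp
  qed
  finally show ?thesis .
qed

lemma pa_char:
  assumes "ring R" "S \<subseteq> carrier R"
  shows "ideal (pa R S) R" "Pc R S (pa R S)" "\<And>c. ideal c R \<Longrightarrow> Pc R S c \<Longrightarrow> pa R S \<subseteq> c"
proof -
  interpret R: ring R by fact
  define B where "B = \<Inter>{c. ideal c R \<and> Pc R S c}"
  have ne: "{c. ideal c R \<and> Pc R S c} \<noteq> {}"
    using R.oneideal by (auto simp: Pc_def intro!: exI[of _ "carrier R"])
  have iB: "ideal B R" unfolding B_def by (rule R.i_Intersect) (use ne in auto)
  have pB: "Pc R S B" unfolding B_def Pc_def by (auto simp: Pc_def)
  have lB: "\<And>c. ideal c R \<Longrightarrow> Pc R S c \<Longrightarrow> B \<subseteq> c" unfolding B_def by auto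
  have eq: "pa R S = B"
    unfolding pa_def
  proof (rule the_equality)
    show "ideal B R \<and> image_left_reg R S B \<and> (\<forall>c. ideal c R \<and> image_left_reg R S c \<longrightarrow> B \<subseteq> c)"
      using iB pB lB ilr_iff[OF assms(1) _ assms(2)] by blast
  next
    fix b assume h: "ideal b R \<and> image_left_reg R S b \<and> (\<forall>c. ideal c R \<and> image_left_reg R S c \<longrightarrow> b \<subseteq> c)"
    then have "b \<subseteq> B" using iB pB ilr_iff[OF assms(1) _ assms(2)] by blast
    moreover have "B \<subseteq> b" using h lB ilr_iff[OF assms(1) _ assms(2)] by blast
    ultimately show "b = B" by blast
  qed
  show "ideal (pa R S) R" "Pc R S (pa R S)" "\<And>c. ideal c R \<Longrightarrow> Pc R S c \<Longrightarrow> pa R S \<subseteq> c"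
    using iB pB lB eq by auto
qed

theorem theorem1p5:
  fixes R :: "('a, 'm) ring_scheme" and S :: "'a set"
  assumes "ring R" and "left_ore_set R S"
  shows "(left_localizable R S \<longleftrightarrow> pa R S \<noteq> carrier R) \<and>
    (pa R S \<noteq> carrier R \<longrightarrow>
       left_denominator_set (R Quot pa R S) (qproj R (pa R S) ` S) \<and>
       qproj R (pa R S) ` S \<subseteq> left_reg (R Quot pa R S) \<and>
       ass R S = {r \<in> carrier R. qproj R (pa R S) r \<in> ass_l (R Quot pa R S) (qproj R (pa R S) ` S)} \<and>
       (\<forall>(Q :: ('b, 'n) ring_scheme) \<sigma>.
          is_left_ore_localization (R Quot pa R S) (qproj R (pa R S) ` S) Q \<sigma> \<longrightarrow>
          (\<exists>f \<in> ring_iso (univ_loc R S) Q.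
             \<forall>r\<in>carrier R. f (loc_map R S r) = \<sigma> (qproj R (pa R S) r))))"
proof -
  interpret R: ring R by fact
  note O = ore_unfold[OF assms(2)]
  define b where "b = pa R S"
  have ib1: "ideal b R" unfolding b_def by (rule pa_char(1)[OF assms(1) O(1)])
  have ib2: "Pc R S b" unfolding b_def by (rule pa_char(2)[OF assms(1) O(1)])
  have ib3: "b \<subseteq> c" if "ideal c R" "Pc R S c" for c
    using pa_char(3)[OF assms(1) O(1) that] unfolding b_def .
  note ib = ib1 ib2 ib3
  interpret L: ring "univ_loc R S" by (rule L_ring)
  interpret LH: ring_hom_ring R "univ_loc R S" "loc_map R S"
    by (rule ring_hom_ringI2[OF assms(1) L_ring lmap_hom[OF assms(1)]])
  have lxi: "loc_map R S s \<in> Units (univ_loc R S)" "inv\<^bsub>univ_loc R S\<^esub> (loc_map R S s) = loc_x R S s"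
    if "s \<in> S" for s using lx_inv[OF assms(1) O(1) that] by auto
  define K where "K = {r \<in> carrier R. loc_map R S r = \<zero>\<^bsub>univ_loc R S\<^esub>}"
  have K_ass: "ass R S = K" by (simp add: ass_def K_def)
  have iK: "ideal K R" using LH.kernel_is_ideal unfolding a_kernel_def' K_def .
  have pK: "Pc R S K" unfolding Pc_def
  proof (intro ballI impI)
    fix s y assume sy: "s \<in> S" "y \<in> carrier R" "y \<otimes>\<^bsub>R\<^esub> s \<in> K"
    have sc: "s \<in> carrier R" using sy O(1) by auto
    have U: "loc_map R S s \<in> Units (univ_loc R S)" using lxi sy by auto
    have z: "loc_map R S y \<otimes>\<^bsub>univ_loc R S\<^esub> loc_map R S s = \<zero>\<^bsub>univ_loc R S\<^esub>"
      using sy sc K_def by simp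
    have "loc_map R S y = loc_map R S y \<otimes>\<^bsub>univ_loc R S\<^esub> (loc_map R S s \<otimes>\<^bsub>univ_loc R S\<^esub> inv\<^bsub>univ_loc R S\<^esub> (loc_map R S s))"
      using U sy by simp
    also have "\<dots> = (loc_map R S y \<otimes>\<^bsub>univ_loc R S\<^esub> loc_map R S s) \<otimes>\<^bsub>univ_loc R S\<^esub> inv\<^bsub>univ_loc R S\<^esub> (loc_map R S s)"
      using U sy sc by (simp add: L.m_assoc L.Units_closed)
    also have "\<dots> = \<zero>\<^bsub>univ_loc R S\<^esub>" using z U by simp
    finally show "y \<in> K" using sy K_def by simp
  qed
  have bK: "b \<subseteq> K" using ib(3)[OF iK pK] .
  have cancK: "r \<in> K" if "s \<in> S" "r \<in> carrier R" "s \<otimes>\<^bsub>R\<^esub> r \<in> K" for s r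
  proof -
    have sc: "s \<in> carrier R" using that O(1) by auto
    have U: "loc_map R S s \<in> Units (univ_loc R S)" using lxi that by auto
    have z: "loc_map R S s \<otimes>\<^bsub>univ_loc R S\<^esub> loc_map R S r = \<zero>\<^bsub>univ_loc R S\<^esub>"
      using that sc K_def by simp
    have "loc_map R S r = (inv\<^bsub>univ_loc R S\<^esub> (loc_map R S s) \<otimes>\<^bsub>univ_loc R S\<^esub> loc_map R S s) \<otimes>\<^bsub>univ_loc R S\<^esub> loc_map R S r"
      using U that by simp
    also have "\<dots> = inv\<^bsub>univ_loc R S\<^esub> (loc_map R S s) \<otimes>\<^bsub>univ_loc R S\<^esub> (loc_map R S s \<otimes>\<^bsub>univ_loc R S\<^esub> loc_map R S r)"
      using U that sc by (simp add: L.m_assoc[symmetric] L.Units_closed)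
    also have "\<dots> = \<zero>\<^bsub>univ_loc R S\<^esub>" using z U by simp
    finally show "r \<in> K" using that K_def by simp
  qed
  have b_prop: "s \<notin> b" if "b \<noteq> carrier R" "s \<in> S" for s
  proof
    assume "s \<in> b"
    then have "\<one>\<^bsub>R\<^esub> \<otimes>\<^bsub>R\<^esub> s \<in> b" using that O(1) by auto
    then have "\<one>\<^bsub>R\<^esub> \<in> b" using ib(2) that unfolding Pc_def by blast
    then show False using ideal.one_imp_carrier[OF ib(1)] that by simp
  qed
  have part1a: "b \<noteq> carrier R" if "left_localizable R S"
  proof
    assume "b = carrier R"
    then have "\<one>\<^bsub>R\<^esub> \<in> K" using bK by auto
    then have "\<one>\<^bsub>univ_loc R S\<^esub> = \<zero>\<^bsub>univ_loc R S\<^esub>" using K_def by simp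
    then show False using that unfolding left_localizable_def by simp
  qed
  have main: "left_localizable R S \<and>
       left_denominator_set (R Quot b) (qproj R b ` S) \<and>
       qproj R b ` S \<subseteq> left_reg (R Quot b) \<and>
       ass R S = {r \<in> carrier R. qproj R b r \<in> ass_l (R Quot b) (qproj R b ` S)} \<and>
       (\<forall>(Q :: ('b, 'n) ring_scheme) \<sigma>.
          is_left_ore_localization (R Quot b) (qproj R b ` S) Q \<sigma> \<longrightarrow>
          (\<exists>f \<in> ring_iso (univ_loc R S) Q.
             \<forall>r\<in>carrier R. f (loc_map R S r) = \<sigma> (qproj R b r)))"
    if nb: "b \<noteq> carrier R"
  proof -
    define A where "A = R Quot b"
    define \<pi> where "\<pi> = qproj R b"
    define T where "T = \<pi> ` S"
    have ringA: "ring A" unfolding A_def by (rule ideal.quotient_is_ring[OF ib(1)])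
    have \<pi>h: "\<pi> \<in> ring_hom R A"
      unfolding \<pi>_def A_def qproj_def[abs_def] using ideal.rcos_ring_hom[OF ib(1)] by simp
    interpret A: ring A by (rule ringA)
    interpret AH: ring_hom_ring R A \<pi> by (rule ring_hom_ringI2[OF assms(1) ringA \<pi>h])
    have Ac: "carrier A = \<pi> ` carrier R"
      unfolding A_def \<pi>_def qproj_def[abs_def] by (rule quot_carrier[OF ib(1)])
    have Az: "\<pi> r = \<zero>\<^bsub>A\<^esub> \<longleftrightarrow> r \<in> b" if "r \<in> carrier R" for r
      unfolding A_def \<pi>_def qproj_def using rcos_eq_zero[OF ib(1) that] by (simp add: FactRing_def)
    have Sc: "s \<in> carrier R" if "s \<in> S" for s using that O(1) by auto
    have gA: "germ A T"
      unfolding germ_def germ_axioms_def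
    proof (intro conjI allI impI ringA)
      show "T \<subseteq> carrier A" unfolding T_def using Sc by auto
      show "\<one>\<^bsub>A\<^esub> \<in> T" unfolding T_def using O(2) AH.hom_one by (metis image_eqI)
      show "s \<otimes>\<^bsub>A\<^esub> t \<in> T" if hst: "s \<in> T" "t \<in> T" for s t
      proof -
        obtain s0 t0 where "s0 \<in> S" "t0 \<in> S" "s = \<pi> s0" "t = \<pi> t0" using hst T_def by auto
        then show ?thesis unfolding T_def using O(4) Sc by (metis AH.hom_mult image_eqI)
      qed
      show "\<exists>t\<in>T. \<exists>r'\<in>carrier A. t \<otimes>\<^bsub>A\<^esub> r = r' \<otimes>\<^bsub>A\<^esub> s" if hrs: "r \<in> carrier A" "s \<in> T" for r s
      proof -
        obtain y s0 where ys: "y \<in> carrier R" "s0 \<in> S" "r = \<pi> y" "s = \<pi> s0" using hrs T_def Ac by auto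
        obtain u r' where ur: "u \<in> S" "r' \<in> carrier R" "u \<otimes>\<^bsub>R\<^esub> y = r' \<otimes>\<^bsub>R\<^esub> s0" using O(5)[OF ys(1,2)] by blast
        have "\<pi> u \<otimes>\<^bsub>A\<^esub> r = \<pi> r' \<otimes>\<^bsub>A\<^esub> s" using ur ys Sc by (metis AH.hom_mult)
        moreover have "\<pi> u \<in> T" "\<pi> r' \<in> carrier A" using ur T_def by auto
        ultimately show ?thesis by blast
      qed
      show "x = \<zero>\<^bsub>A\<^esub>" if htx: "t \<in> T" "x \<in> carrier A" "x \<otimes>\<^bsub>A\<^esub> t = \<zero>\<^bsub>A\<^esub>" for t x
      proof -
        obtain y s0 where ys: "y \<in> carrier R" "s0 \<in> S" "x = \<pi> y" "t = \<pi> s0" using htx T_def Ac by auto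
        have "\<pi> (y \<otimes>\<^bsub>R\<^esub> s0) = \<zero>\<^bsub>A\<^esub>" using htx ys Sc by simp
        moreover have "y \<otimes>\<^bsub>R\<^esub> s0 \<in> carrier R" using ys Sc by simp
        ultimately have "y \<otimes>\<^bsub>R\<^esub> s0 \<in> b" using Az by blast
        then have "y \<in> b" using ib(2) ys unfolding Pc_def by blast
        then show ?thesis using Az ys by simp
      qed
    qed
    interpret G: germ A T by (rule gA)
    interpret GR: ring "G.GR" by (rule G.GR_ring)
    have \<phi>0: "G.gphi \<circ> \<pi> \<in> ring_hom R G.GR" by (rule ring_hom_trans[OF \<pi>h G.gphi_hom])
    have \<phi>0u: "\<forall>s\<in>S. (G.gphi \<circ> \<pi>) s \<in> Units G.GR" using G.gphi_unit T_def by auto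
    obtain \<psi>0 where \<psi>0: "\<psi>0 \<in> ring_hom (univ_loc R S) G.GR" "\<forall>r\<in>carrier R. \<psi>0 (loc_map R S r) = G.gphi (\<pi> r)"
      using univ_prop[OF assms(1) G.GR_ring \<phi>0 \<phi>0u O(1)] by auto
    interpret PH: ring_hom_ring "univ_loc R S" G.GR \<psi>0 by (rule ring_hom_ringI2[OF L_ring G.GR_ring \<psi>0(1)])
    have kerA: "\<pi> r \<in> ass_l A T" if "r \<in> K" for r
    proof -
      have r: "r \<in> carrier R" "loc_map R S r = \<zero>\<^bsub>univ_loc R S\<^esub>" using that K_def by auto
      have "G.gphi (\<pi> r) = \<zero>\<^bsub>G.GR\<^esub>" using \<psi>0(2) r by (metis PH.hom_zero)
      then obtain t where "t \<in> T" "t \<otimes>\<^bsub>A\<^esub> \<pi> r = \<zero>\<^bsub>A\<^esub>" using G.gphi_ker[of "\<pi> r"] r by auto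
      then show ?thesis unfolding ass_l_def using r by auto
    qed
    have Aker: "r \<in> K" if hr: "r \<in> carrier R" "\<pi> r \<in> ass_l A T" for r
    proof -
      obtain s where s: "s \<in> S" "\<pi> s \<otimes>\<^bsub>A\<^esub> \<pi> r = \<zero>\<^bsub>A\<^esub>" using hr unfolding ass_l_def T_def by auto
      then have "\<pi> (s \<otimes>\<^bsub>R\<^esub> r) = \<zero>\<^bsub>A\<^esub>" using that Sc by simp
      moreover have "s \<otimes>\<^bsub>R\<^esub> r \<in> carrier R" using hr s Sc by simp
      ultimately have "s \<otimes>\<^bsub>R\<^esub> r \<in> b" using Az by blast
      then show ?thesis using cancK[OF s(1) hr(1)] bK by auto
    qed
    have nontriv: "\<one>\<^bsub>univ_loc R S\<^esub> \<noteq> \<zero>\<^bsub>univ_loc R S\<^esub>"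
    proof
      assume h: "\<one>\<^bsub>univ_loc R S\<^esub> = \<zero>\<^bsub>univ_loc R S\<^esub>"
      have "\<one>\<^bsub>R\<^esub> \<in> K" using K_def h by simp
      then have "\<pi> \<one>\<^bsub>R\<^esub> \<in> ass_l A T" by (rule kerA)
      then obtain s where s: "s \<in> S" "\<pi> s \<otimes>\<^bsub>A\<^esub> \<one>\<^bsub>A\<^esub> = \<zero>\<^bsub>A\<^esub>" unfolding ass_l_def T_def by auto
      then have "\<pi> s = \<zero>\<^bsub>A\<^esub>" using Sc by simp
      then show False using Az b_prop[OF nb s(1)] Sc s by simp
    qed
    have loc: "left_localizable R S"
      unfolding left_localizable_def using nontriv L_form[OF assms] by blast
    have den: "left_denominator_set A T"
      unfolding left_denominator_set_def left_ore_set_def mult_set_def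
    proof (intro conjI ballI impI)
      show "T \<subseteq> carrier A" using G.TC .
      show "\<one>\<^bsub>A\<^esub> \<in> T" using G.T1 .
      show "\<zero>\<^bsub>A\<^esub> \<notin> T"
      proof
        assume "\<zero>\<^bsub>A\<^esub> \<in> T"
        then obtain s where "s \<in> S" "\<pi> s = \<zero>\<^bsub>A\<^esub>" unfolding T_def by auto
        then show False using Az b_prop[OF nb] Sc by auto
      qed
      show "s \<otimes>\<^bsub>A\<^esub> t \<in> T" if "s \<in> T" "t \<in> T" for s t using G.Tmul that .
      show "\<exists>t\<in>T. \<exists>r'\<in>carrier A. t \<otimes>\<^bsub>A\<^esub> r = r' \<otimes>\<^bsub>A\<^esub> s" if "r \<in> carrier A" "s \<in> T" for r s
        using G.ore that .
      show "\<exists>t\<in>T. t \<otimes>\<^bsub>A\<^esub> r = \<zero>\<^bsub>A\<^esub>" if "r \<in> carrier A" "s \<in> T" "r \<otimes>\<^bsub>A\<^esub> s = \<zero>\<^bsub>A\<^esub>" for r s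
      proof -
        have "r = \<zero>\<^bsub>A\<^esub>" using G.canc that by blast
        moreover have "\<one>\<^bsub>A\<^esub> \<otimes>\<^bsub>A\<^esub> \<zero>\<^bsub>A\<^esub> = \<zero>\<^bsub>A\<^esub>" by simp
        ultimately show ?thesis using G.T1 by blast
      qed
    qed
    have lreg: "T \<subseteq> left_reg A"
      using ilr_iff[OF assms(1) ib(1) O(1)] ib(2)
      unfolding image_left_reg_def T_def \<pi>_def A_def qproj_def[abs_def] by simp
    have assq: "ass R S = {r \<in> carrier R. \<pi> r \<in> ass_l A T}"
      unfolding K_ass using kerA Aker K_def by auto
    have iso: "\<exists>f \<in> ring_iso (univ_loc R S) Q. \<forall>r\<in>carrier R. f (loc_map R S r) = \<sigma> (\<pi> r)"
      if H: "is_left_ore_localization A T Q \<sigma>" for Q :: "('b, 'n) ring_scheme" and \<sigma>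
    proof -
      have Hs: "ring Q" "\<sigma> \<in> ring_hom A Q" "\<forall>t\<in>T. \<sigma> t \<in> Units Q"
        "\<forall>q\<in>carrier Q. \<exists>t\<in>T. \<exists>a\<in>carrier A. q = inv\<^bsub>Q\<^esub> (\<sigma> t) \<otimes>\<^bsub>Q\<^esub> \<sigma> a"
        "{a \<in> carrier A. \<sigma> a = \<zero>\<^bsub>Q\<^esub>} = ass_l A T"
        using H unfolding is_left_ore_localization_def by auto
      interpret Q: ring Q by (rule Hs(1))
      interpret SH: ring_hom_ring A Q \<sigma> by (rule ring_hom_ringI2[OF ringA Hs(1,2)])
      have \<phi>: "\<sigma> \<circ> \<pi> \<in> ring_hom R Q" by (rule ring_hom_trans[OF \<pi>h Hs(2)])
      have \<phi>u: "\<forall>s\<in>S. (\<sigma> \<circ> \<pi>) s \<in> Units Q" using Hs(3) T_def by auto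
      obtain \<psi> where \<psi>: "\<psi> \<in> ring_hom (univ_loc R S) Q" "\<forall>r\<in>carrier R. \<psi> (loc_map R S r) = \<sigma> (\<pi> r)"
        "\<forall>s\<in>S. \<psi> (loc_x R S s) = inv\<^bsub>Q\<^esub> (\<sigma> (\<pi> s))"
        using univ_prop[OF assms(1) Hs(1) \<phi> \<phi>u O(1)] by auto
      interpret QH: ring_hom_ring "univ_loc R S" Q \<psi> by (rule ring_hom_ringI2[OF L_ring Hs(1) \<psi>(1)])
      have val: "\<psi> (loc_x R S s \<otimes>\<^bsub>univ_loc R S\<^esub> loc_map R S r) = inv\<^bsub>Q\<^esub> (\<sigma> (\<pi> s)) \<otimes>\<^bsub>Q\<^esub> \<sigma> (\<pi> r)"
        if "s \<in> S" "r \<in> carrier R" for s r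
      proof -
        have c: "loc_x R S s \<in> carrier (univ_loc R S)" "loc_map R S r \<in> carrier (univ_loc R S)"
          using lx_carrier[of s S R] that by auto
        have "\<psi> (loc_x R S s \<otimes>\<^bsub>univ_loc R S\<^esub> loc_map R S r) = \<psi> (loc_x R S s) \<otimes>\<^bsub>Q\<^esub> \<psi> (loc_map R S r)"
          by (rule ring_hom_mult[OF \<psi>(1) c])
        then show ?thesis using \<psi>(2,3) that by simp
      qed
      have inj: "inj_on \<psi> (carrier (univ_loc R S))"
      proof (rule inj_onI)
        fix u v assume uv: "u \<in> carrier (univ_loc R S)" "v \<in> carrier (univ_loc R S)" "\<psi> u = \<psi> v"
        define D where "D = u \<oplus>\<^bsub>univ_loc R S\<^esub> \<ominus>\<^bsub>univ_loc R S\<^esub> v"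
        have Dc: "D \<in> carrier (univ_loc R S)" using uv D_def by simp
        have "\<psi> D = \<psi> u \<oplus>\<^bsub>Q\<^esub> \<ominus>\<^bsub>Q\<^esub> \<psi> v" using uv D_def by simp
        then have \<psi>D: "\<psi> D = \<zero>\<^bsub>Q\<^esub>" using uv by (simp add: Q.r_neg)
        obtain s r where sr: "s \<in> S" "r \<in> carrier R" "D = loc_x R S s \<otimes>\<^bsub>univ_loc R S\<^esub> loc_map R S r"
          using L_form[OF assms Dc] by blast
        have Us: "\<sigma> (\<pi> s) \<in> Units Q" using Hs(3) T_def sr by auto
        have ci: "inv\<^bsub>Q\<^esub> (\<sigma> (\<pi> s)) \<otimes>\<^bsub>Q\<^esub> \<sigma> (\<pi> r) = \<zero>\<^bsub>Q\<^esub>" using \<psi>D val sr by simp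
        have "\<sigma> (\<pi> r) = \<sigma> (\<pi> s) \<otimes>\<^bsub>Q\<^esub> (inv\<^bsub>Q\<^esub> (\<sigma> (\<pi> s)) \<otimes>\<^bsub>Q\<^esub> \<sigma> (\<pi> r))"
          using Us sr by (simp add: Q.m_assoc[symmetric] Q.Units_closed)
        also have "\<dots> = \<zero>\<^bsub>Q\<^esub>" using ci Us by (simp add: Q.Units_closed)
        finally have e: "\<sigma> (\<pi> r) = \<zero>\<^bsub>Q\<^esub>" .
        have "\<pi> r \<in> carrier A" using sr(2) by simp
        then have "\<pi> r \<in> {a \<in> carrier A. \<sigma> a = \<zero>\<^bsub>Q\<^esub>}" using e by blast
        then have "\<pi> r \<in> ass_l A T" unfolding Hs(5) .
        then have "r \<in> K" using Aker sr by simp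
        then have "loc_map R S r = \<zero>\<^bsub>univ_loc R S\<^esub>" using K_def by simp
        then have "D = \<zero>\<^bsub>univ_loc R S\<^esub>" using sr lx_carrier[of s S R] by simp
        then have "\<ominus>\<^bsub>univ_loc R S\<^esub> (\<ominus>\<^bsub>univ_loc R S\<^esub> v) = u"
          using uv D_def by (intro L.minus_equality) auto
        then show "u = v" using uv by simp
      qed
      have surj: "\<psi> ` carrier (univ_loc R S) = carrier Q"
      proof
        show "\<psi> ` carrier (univ_loc R S) \<subseteq> carrier Q" by auto
      next
        show "carrier Q \<subseteq> \<psi> ` carrier (univ_loc R S)"
        proof
          fix q assume "q \<in> carrier Q"
          then obtain t a where ta: "t \<in> T" "a \<in> carrier A" "q = inv\<^bsub>Q\<^esub> (\<sigma> t) \<otimes>\<^bsub>Q\<^esub> \<sigma> a" using Hs(4) by blast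
          obtain s r where sr: "s \<in> S" "t = \<pi> s" "r \<in> carrier R" "a = \<pi> r" using ta T_def Ac by auto
          have "q = \<psi> (loc_x R S s \<otimes>\<^bsub>univ_loc R S\<^esub> loc_map R S r)" using val sr ta by simp
          moreover have "loc_x R S s \<otimes>\<^bsub>univ_loc R S\<^esub> loc_map R S r \<in> carrier (univ_loc R S)"
            using sr lx_carrier[of s S R] by simp
          ultimately show "q \<in> \<psi> ` carrier (univ_loc R S)" by blast
        qed
      qed
      have "\<psi> \<in> ring_iso (univ_loc R S) Q"
        unfolding ring_iso_def bij_betw_def using \<psi>(1) inj surj by blast
      then show ?thesis using \<psi>(2) by blast
    qed
    show ?thesis using loc den lreg assq iso unfolding A_def T_def \<pi>_def by blast
  qed
  have "(left_localizable R S \<longleftrightarrow> b \<noteq> carrier R) \<and>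
    (b \<noteq> carrier R \<longrightarrow>
       left_denominator_set (R Quot b) (qproj R b ` S) \<and>
       qproj R b ` S \<subseteq> left_reg (R Quot b) \<and>
       ass R S = {r \<in> carrier R. qproj R b r \<in> ass_l (R Quot b) (qproj R b ` S)} \<and>
       (\<forall>(Q :: ('b, 'n) ring_scheme) \<sigma>.
          is_left_ore_localization (R Quot b) (qproj R b ` S) Q \<sigma> \<longrightarrow>
          (\<exists>f \<in> ring_iso (univ_loc R S) Q.
             \<forall>r\<in>carrier R. f (loc_map R S r) = \<sigma> (qproj R b r))))"
    using main part1a by blast
  then show ?thesis unfolding b_def .
qed

end
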